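(* Let $U,V\in\mathcal{L}_2(\mathbb{R}^m)$, $Y:=(U,V)$, and let $S$ be the standard form on $\mathbb{R}^{2m}$. (a) If the convex hull of the support of $\mathrm{Law}(U)$ is $\mathbb{R}^m$, then $\{u:(u,v)\in G\text{ for some }v\}=\mathbb{R}^m$ for every optimal set $G$ of the dual problem. (b) If $V$ is bounded, then there exists an optimal set $G$ of the dual problem such that $\{u:(u,v)\in G\text{ for some }v\}=\mathbb{R}^m$.
   Context: Standard form on $\mathbb{R}^{2m}$: $S((r,s),(u,v)):=\langle s,u\rangle+\langle r,v\rangle$. $G$ is $S$-monotone if $S(x-y,x-y)\ge0$ for $x,y\in G$; maximal if not a strict subset of another $S$-monotone set; $\mathcal{M}(S)$ = family of maximal $S$-monotone sets. $\psi_G(y):=\sup_{x\in G}(S(x,y)-\frac12S(x,x))$. An optimal set of the dual problem is a minimizer of $\mathbb{E}[\psi_G(Y)]$ over $G\in\mathcal{M}(S)$ (such minimizers exist). *)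

theory Defs
  imports "HOL-Probability.Probability"
begin

definition Sform :: "('a::euclidean_space \<times> 'a) \<Rightarrow> ('a \<times> 'a) \<Rightarrow> real" where
  "Sform x y = inner (snd x) (fst y) + inner (fst x) (snd y)"

definition S_monotone :: "('a::euclidean_space \<times> 'a) set \<Rightarrow> bool" where
  "S_monotone G \<longleftrightarrow> (\<forall>x\<in>G. \<forall>y\<in>G. Sform (x - y) (x - y) \<ge> 0)"

definition maximal_S_monotone :: "('a::euclidean_space \<times> 'a) set \<Rightarrow> bool" where
  "maximal_S_monotone G \<longleftrightarrow> S_monotone G \<and> \<not> (\<exists>H. S_monotone H \<and> G \<subset> H)"

definition psi :: "('a::euclidean_space \<times> 'a) set \<Rightarrow> ('a \<times> 'a) \<Rightarrow> ereal" where
  "psi G y = (SUP x\<in>G. ereal (Sform x y - Sform x x / 2))"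

definition eexpectation :: "'s measure \<Rightarrow> ('s \<Rightarrow> ereal) \<Rightarrow> ereal" where
  "eexpectation M f =
     enn2ereal (\<integral>\<^sup>+ w. e2ennreal (f w) \<partial>M) - enn2ereal (\<integral>\<^sup>+ w. e2ennreal (- f w) \<partial>M)"

definition dual_optimal :: "'s measure \<Rightarrow> ('s \<Rightarrow> 'a::euclidean_space) \<Rightarrow> ('s \<Rightarrow> 'a) \<Rightarrow> ('a \<times> 'a) set \<Rightarrow> bool" where
  "dual_optimal M U V G \<longleftrightarrow> maximal_S_monotone G \<and>
     (\<forall>H. maximal_S_monotone H \<longrightarrow>
        eexpectation M (\<lambda>w. psi G (U w, V w)) \<le> eexpectation M (\<lambda>w. psi H (U w, V w)))"

text \<open>Support of the law of U: smallest closed set of full measure.\<close>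
definition law_support :: "'s measure \<Rightarrow> ('s \<Rightarrow> 'a::euclidean_space) \<Rightarrow> 'a set" where
  "law_support M U = {x. \<forall>e>0. emeasure (distr M borel U) (ball x e) > 0}"

end

theory Submission
  imports Defs "HOL-Library.Diagonal_Subsequence"
begin


lemma Sform_self: "Sform (x::'a::euclidean_space\<times>'a) x = 2 * inner (fst x) (snd x)"
  unfolding Sform_def by (simp add: inner_commute)

lemma S_monotone_iff:
  "S_monotone (G::('a::euclidean_space\<times>'a) set) \<longleftrightarrow>
     (\<forall>x\<in>G. \<forall>y\<in>G. inner (fst x - fst y) (snd x - snd y) \<ge> 0)"
  unfolding S_monotone_def Sform_self by simp

lemma maximal_mono:
  fixes G :: "('a::euclidean_space\<times>'a) set"
  assumes "maximal_S_monotone G" "x\<in>G" "y\<in>G"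
  shows "inner (fst x - fst y) (snd x - snd y) \<ge> 0"
  using assms unfolding maximal_S_monotone_def S_monotone_iff by blast

lemma maximal_add:
  fixes G :: "('a::euclidean_space\<times>'a) set"
  assumes "maximal_S_monotone G" "\<And>x. x\<in>G \<Longrightarrow> inner (fst x - u) (snd x - v) \<ge> 0"
  shows "(u,v) \<in> G"
proof (rule ccontr)
  assume n: "(u,v) \<notin> G"
  have "S_monotone (insert (u,v) G)"
    unfolding S_monotone_iff
  proof (intro ballI)
    fix x y assume x: "x \<in> insert (u,v) G" and y: "y \<in> insert (u,v) G"
    have sym: "inner (a - b) (c - d) = inner (b - a) (d - (c::'a))" for a b c d
      by (metis inner_minus_left inner_minus_right minus_diff_eq minus_minus)
    show "inner (fst x - fst y) (snd x - snd y) \<ge> 0"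
    proof -
      { fix z assume "z \<in> G"
        then have "inner (u - fst z) (v - snd z) \<ge> 0" using assms(2)[of z] sym[of "fst z" u "snd z" v] by simp }
      then show ?thesis using x y assms(2) maximal_mono[OF assms(1)] by auto
    qed
  qed
  moreover have "G \<subset> insert (u,v) G" using n by auto
  ultimately show False using assms(1) unfolding maximal_S_monotone_def by blast
qed

lemma maximal_nonempty:
  fixes G :: "('a::euclidean_space\<times>'a) set"
  assumes "maximal_S_monotone G" shows "G \<noteq> {}"
proof
  assume "G = {}"
  moreover have "S_monotone {(0::'a,0::'a)}" unfolding S_monotone_iff by simp
  ultimately show False using assms unfolding maximal_S_monotone_def by blast
qed



lemma double_sum_identity:
  fixes f :: "'b \<Rightarrow> 'a::real_inner" and u :: "'b \<Rightarrow> real"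
  shows "(\<Sum>w\<in>F. \<Sum>w'\<in>F. u w * u w' * (norm (f w - f w'))\<^sup>2)
       = 2 * sum u F * (\<Sum>w\<in>F. u w * (norm (f w))\<^sup>2) - 2 * (norm (\<Sum>w\<in>F. u w *\<^sub>R f w))\<^sup>2"
proof -
  have e: "(norm (a - b))\<^sup>2 = (norm a)\<^sup>2 + (norm b)\<^sup>2 - 2 * inner a b" for a b :: 'a
    by (simp add: power2_norm_eq_inner inner_diff_left inner_diff_right inner_commute)
  have "(\<Sum>w\<in>F. \<Sum>w'\<in>F. u w * u w' * (norm (f w - f w'))\<^sup>2)
     = (\<Sum>w\<in>F. \<Sum>w'\<in>F. u w' * (u w * (norm (f w))\<^sup>2) + u w * (u w' * (norm (f w'))\<^sup>2)
            - 2 * inner (u w *\<^sub>R f w) (u w' *\<^sub>R f w'))"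
    by (simp add: e algebra_simps)
  also have "\<dots> = 2 * sum u F * (\<Sum>w\<in>F. u w * (norm (f w))\<^sup>2)
           - 2 * (\<Sum>w\<in>F. \<Sum>w'\<in>F. inner (u w *\<^sub>R f w) (u w' *\<^sub>R f w'))"
  proof -
    let ?X = "\<lambda>w. u w * (norm (f w))\<^sup>2"
    have 1: "(\<Sum>w\<in>F. \<Sum>w'\<in>F. u w' * ?X w) = sum u F * sum ?X F"
      by (simp add: sum_distrib_right[symmetric] sum_distrib_left mult.commute)
    have 2: "(\<Sum>w\<in>F. \<Sum>w'\<in>F. u w * ?X w') = sum u F * sum ?X F"
      by (simp add: sum_distrib_left[symmetric] sum_distrib_right)
    show ?thesis using 2
      by (simp add: sum_subtractf sum.distrib 1 sum_distrib_left[symmetric])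
  qed
  also have "(\<Sum>w\<in>F. \<Sum>w'\<in>F. inner (u w *\<^sub>R f w) (u w' *\<^sub>R f w')) = (norm (\<Sum>w\<in>F. u w *\<^sub>R f w))\<^sup>2"
    by (simp add: power2_norm_eq_inner inner_sum_left inner_sum_right sum_distrib_left inner_commute mult.left_commute)
  finally show ?thesis .
qed

lemma aux_ineq: "2*(x - y) \<le> 2*(z - w) \<Longrightarrow> 0 \<le> w \<Longrightarrow> x - y \<le> (z::real)" by simp

lemma var_compare:
  fixes a b :: "'c \<Rightarrow> 'a::real_inner"
  assumes "\<And>w. w\<in>F \<Longrightarrow> 0 \<le> u w" "sum u F = 1"
    "\<And>w w'. w\<in>F \<Longrightarrow> w'\<in>F \<Longrightarrow> norm (a w - a w') \<le> norm (b w - b w')"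
  shows "(\<Sum>w\<in>F. u w * (norm (a w))\<^sup>2) - (norm (\<Sum>w\<in>F. u w *\<^sub>R a w))\<^sup>2 \<le> (\<Sum>w\<in>F. u w * (norm (b w))\<^sup>2)"
proof -
  have "(\<Sum>w\<in>F. \<Sum>w'\<in>F. u w * u w' * (norm (a w - a w'))\<^sup>2) \<le> (\<Sum>w\<in>F. \<Sum>w'\<in>F. u w * u w' * (norm (b w - b w'))\<^sup>2)"
    by (intro sum_mono mult_left_mono power_mono) (auto simp: assms)
  then have "2 * ((\<Sum>w\<in>F. u w * (norm (a w))\<^sup>2) - (norm (\<Sum>w\<in>F. u w *\<^sub>R a w))\<^sup>2)
      \<le> 2 * ((\<Sum>w\<in>F. u w * (norm (b w))\<^sup>2) - (norm (\<Sum>w\<in>F. u w *\<^sub>R b w))\<^sup>2)"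
    unfolding double_sum_identity assms(2) by simp
  moreover have "0 \<le> (norm (\<Sum>w\<in>F. u w *\<^sub>R b w))\<^sup>2" by simp
  ultimately show ?thesis
    by (rule aux_ineq)
qed

lemma kirsz_finite:
  fixes E :: "('a::euclidean_space \<times> 'a) set"
  assumes "finite E" "E \<noteq> {}"
    "\<And>e e'. e\<in>E \<Longrightarrow> e'\<in>E \<Longrightarrow> norm (fst e - fst e') \<le> norm (snd e - snd e')"
  shows "\<exists>q. \<forall>e\<in>E. norm (q - fst e) \<le> norm (snd e)"
proof -
  define \<phi> where "\<phi> e = (fst e, snd e, (norm (fst e))\<^sup>2 - (norm (snd e))\<^sup>2)" for e :: "'a \<times> 'a"
  define F where "F = \<phi> ` E"
  define W where "W = convex hull F"
  define \<gamma> where "\<gamma> w = snd (snd w) - (norm (fst w))\<^sup>2" for w :: "'a \<times> 'a \<times> real"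
  have finF: "finite F" using assms(1) by (simp add: F_def)
  have cW: "compact W" unfolding W_def by (intro compact_convex_hull finite_imp_compact finF)
  have neW: "W \<noteq> {}" using assms(2) by (simp add: W_def F_def)
  have contg: "continuous_on W \<gamma>" unfolding \<gamma>_def by (intro continuous_intros)
  obtain wb where wb: "wb \<in> W" "\<And>w. w\<in>W \<Longrightarrow> \<gamma> w \<le> \<gamma> wb"
    using continuous_attains_sup[OF cW neW contg] by blast
  obtain Q B A where wbeq: "wb = (Q,B,A)" by (cases wb) auto
  have g0: "\<gamma> wb \<le> 0"
  proof -
    obtain u where u: "\<forall>x\<in>F. 0 \<le> u x" "sum u F = 1" "(\<Sum>x\<in>F. u x *\<^sub>R x) = wb"
      using wb(1) unfolding W_def convex_hull_finite[OF finF] by blast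
    have Qe: "Q = (\<Sum>x\<in>F. u x *\<^sub>R fst x)"
    proof -
      have "Q = fst wb" by (simp add: wbeq)
      also have "\<dots> = (\<Sum>x\<in>F. u x *\<^sub>R fst x)" unfolding u(3)[symmetric] by (simp add: fst_sum)
      finally show ?thesis .
    qed
    have Ae: "A = (\<Sum>x\<in>F. u x * snd (snd x))"
    proof -
      have "A = snd (snd wb)" by (simp add: wbeq)
      also have "\<dots> = (\<Sum>x\<in>F. u x * snd (snd x))" unfolding u(3)[symmetric] by (simp add: snd_sum)
      finally show ?thesis .
    qed
    have sx: "snd (snd x) = (norm (fst x))\<^sup>2 - (norm (fst (snd x)))\<^sup>2" if "x \<in> F" for x
      using that by (auto simp: F_def \<phi>_def)
    have pw: "norm (fst x - fst x') \<le> norm (fst (snd x) - fst (snd x'))" if "x \<in> F" "x' \<in> F" for x x'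
      using that assms(3) by (auto simp: F_def \<phi>_def)
    have "A = (\<Sum>x\<in>F. u x * (norm (fst x))\<^sup>2) - (\<Sum>x\<in>F. u x * (norm (fst (snd x)))\<^sup>2)"
      unfolding Ae by (simp add: sx right_diff_distrib sum_subtractf)
    moreover have "(\<Sum>x\<in>F. u x * (norm (fst x))\<^sup>2) - (norm (\<Sum>x\<in>F. u x *\<^sub>R fst x))\<^sup>2
        \<le> (\<Sum>x\<in>F. u x * (norm (fst (snd x)))\<^sup>2)"
      by (rule var_compare) (use u pw in auto)
    ultimately show ?thesis unfolding \<gamma>_def wbeq Qe by simp
  qed
  have "norm (Q - fst e) \<le> norm (snd e)" if e: "e \<in> E" for e
  proof -
    define q where "q = fst e"
    define a where "a = (norm (fst e))\<^sup>2 - (norm (snd e))\<^sup>2"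
    have xF: "\<phi> e \<in> W" using e unfolding W_def F_def by (simp add: hull_inc)
    define D where "D = a - A - 2 * inner Q (q - Q)"
    define N where "N = (norm (q - Q))\<^sup>2"
    have key: "t * D \<le> t\<^sup>2 * N" if t: "0 \<le> t" "t \<le> 1" for t
    proof -
      have "wb + t *\<^sub>R (\<phi> e - wb) \<in> W"
      proof -
        have "(1 - t) *\<^sub>R wb + t *\<^sub>R \<phi> e \<in> W"
          using convexD_alt[OF convex_convex_hull[of F] wb(1)[unfolded W_def] xF[unfolded W_def] t]
          by (simp add: W_def)
        then show ?thesis by (simp add: algebra_simps)
      qed
      then have "\<gamma> (wb + t *\<^sub>R (\<phi> e - wb)) \<le> \<gamma> wb" by (rule wb(2))
      moreover have "\<gamma> (wb + t *\<^sub>R (\<phi> e - wb)) = \<gamma> wb + t * D - t\<^sup>2 * N"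
      proof -
        have f1: "fst (wb + t *\<^sub>R (\<phi> e - wb)) = Q + t *\<^sub>R (q - Q)" by (simp add: wbeq \<phi>_def q_def)
        have f2: "snd (snd (wb + t *\<^sub>R (\<phi> e - wb))) = A + t * (a - A)" by (simp add: wbeq \<phi>_def a_def)
        have n: "(norm (Q + t *\<^sub>R (q-Q)))\<^sup>2 = (norm Q)\<^sup>2 + 2*t*inner Q (q-Q) + t\<^sup>2*(norm (q-Q))\<^sup>2"
          unfolding power2_norm_eq_inner
          by (simp add: inner_add_left inner_add_right inner_commute power2_eq_square algebra_simps)
        have g: "\<gamma> wb = A - (norm Q)\<^sup>2" by (simp add: \<gamma>_def wbeq)
        show ?thesis unfolding g by (simp only: \<gamma>_def f1 f2 n) (simp add: D_def N_def algebra_simps)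
      qed
      ultimately show ?thesis by simp
    qed
    have D0: "D \<le> 0"
    proof (rule ccontr)
      assume "\<not> D \<le> 0"
      then have Dp: "D > 0" by simp
      define t where "t = D / (N + D)"
      have N0: "N \<ge> 0" by (simp add: N_def)
      have t01: "0 < t" "t \<le> 1" using Dp N0 by (auto simp: t_def divide_simps)
      have "t * D \<le> t\<^sup>2 * N" using key t01 by simp
      then have "D \<le> t * N" using t01 by (simp add: power2_eq_square)
      moreover have "t * N < D"
      proof -
        have "N / (N+D) < 1" using Dp N0 by (simp add: divide_simps)
        then have "D * (N/(N+D)) < D * 1" using Dp by (rule mult_strict_left_mono)
        then show ?thesis by (simp add: t_def)
      qed
      ultimately show False by simp
    qed
    have "(norm (Q - q))\<^sup>2 - (norm (snd e))\<^sup>2 = (norm Q)\<^sup>2 - 2 * inner Q q + a"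
      by (simp add: a_def q_def power2_norm_eq_inner inner_diff_left inner_diff_right inner_commute)
    also have "\<dots> \<le> A - (norm Q)\<^sup>2"
      using D0 by (simp add: D_def power2_norm_eq_inner inner_diff_right)
    also have "\<dots> = \<gamma> wb" by (simp add: \<gamma>_def wbeq)
    finally have "(norm (Q - q))\<^sup>2 \<le> (norm (snd e))\<^sup>2" using g0 by linarith
    then have "norm (Q - q) \<le> norm (snd e)" by (rule power2_le_imp_le) simp
    then show ?thesis unfolding q_def .
  qed
  then show ?thesis by blast
qed



lemma inner_pm:
  fixes r s u v :: "'a::real_inner"
  shows "inner (r - u) (s - v) = ((norm (r + s - (u+v)))\<^sup>2 - (norm ((r - s) - (u - v)))\<^sup>2)/4"
  unfolding power2_norm_eq_inner
  by (simp add: inner_add_left inner_add_right inner_diff_left inner_diff_right inner_commute algebra_simps)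

lemma mono_norm:
  fixes r s u v :: "'a::real_inner"
  assumes "inner (r - u) (s - v) \<ge> 0"
  shows "norm ((r - s) - (u - v)) \<le> norm (r + s - (u+v))"
proof -
  have "(norm ((r - s) - (u - v)))\<^sup>2 \<le> (norm (r + s - (u+v)))\<^sup>2" using assms inner_pm[of r u s v] by simp
  then show ?thesis by (rule power2_le_imp_le) simp
qed

lemma minty:
  fixes G :: "('a::euclidean_space \<times> 'a) set"
  assumes mx: "maximal_S_monotone G"
  shows "\<exists>x\<in>G. fst x + snd x = z"
proof -
  define K where "K x = cball (fst x - snd x) (norm (fst x + snd x - z))" for x :: "'a \<times> 'a"
  obtain x0 where x0: "x0 \<in> G" using maximal_nonempty[OF mx] by blast
  have "K x0 \<inter> (\<Inter>x\<in>G. K x) \<noteq> {}"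
  proof (rule compact_imp_fip_image)
    show "compact (K x0)" by (simp add: K_def)
    show "closed (K i)" for i by (simp add: K_def)
    fix I' assume I': "finite I'" "I' \<subseteq> G"
    define E where "E = (\<lambda>x. (fst x - snd x, fst x + snd x - z)) ` (insert x0 I')"
    have "\<exists>q. \<forall>e\<in>E. norm (q - fst e) \<le> norm (snd e)"
    proof (rule kirsz_finite)
      show "finite E" using I' by (simp add: E_def)
      show "E \<noteq> {}" by (simp add: E_def)
      fix e e' assume "e \<in> E" "e' \<in> E"
      then obtain x x' where xx: "x \<in> G" "x' \<in> G" "e = (fst x - snd x, fst x + snd x - z)"
        "e' = (fst x' - snd x', fst x' + snd x' - z)" using I' x0 unfolding E_def by blast
      have "inner (fst x - fst x') (snd x - snd x') \<ge> 0" by (rule maximal_mono[OF mx xx(1,2)])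
      from mono_norm[OF this] show "norm (fst e - fst e') \<le> norm (snd e - snd e')"
        unfolding xx by (simp add: algebra_simps)
    qed
    then obtain q where q: "\<And>e. e\<in>E \<Longrightarrow> norm (q - fst e) \<le> norm (snd e)" by blast
    have "q \<in> K x" if "x \<in> insert x0 I'" for x
      using q[of "(fst x - snd x, fst x + snd x - z)"] that unfolding K_def E_def
      by (auto simp: dist_norm norm_minus_commute)
    then show "K x0 \<inter> (\<Inter>x\<in>I'. K x) \<noteq> {}" by blast
  qed
  then obtain q where q: "\<And>x. x \<in> G \<Longrightarrow> q \<in> K x" by blast
  define u where "u = (z + q) /\<^sub>R 2"
  define v where "v = (z - q) /\<^sub>R 2"
  have uv: "u + v = z" "u - v = q"
  proof -
    have "u + v = ((z+q)+(z-q)) /\<^sub>R 2" unfolding u_def v_def by (simp only: scaleR_add_right)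
    also have "(z+q)+(z-q) = 2 *\<^sub>R z" by (simp add: scaleR_2)
    finally show "u + v = z" by simp
    have "u - v = ((z+q)-(z-q)) /\<^sub>R 2" unfolding u_def v_def by (simp only: scaleR_diff_right)
    also have "(z+q)-(z-q) = 2 *\<^sub>R q" by (simp add: scaleR_2)
    finally show "u - v = q" by simp
  qed
  have "(u, v) \<in> G"
  proof (rule maximal_add[OF mx])
    fix x assume x: "x \<in> G"
    have "norm ((fst x - snd x) - (u - v)) \<le> norm (fst x + snd x - (u + v))"
      using q[OF x] unfolding uv by (simp add: K_def dist_norm norm_minus_commute algebra_simps)
    then show "inner (fst x - u) (snd x - v) \<ge> 0"
      unfolding inner_pm by (simp add: power_mono)
  qed
  then show ?thesis using uv by force
qed



lemma maximal_intro:
  fixes H :: "('a::euclidean_space \<times> 'a) set"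
  assumes "S_monotone H"
    "\<And>u v. (\<And>x. x\<in>H \<Longrightarrow> inner (fst x - u) (snd x - v) \<ge> 0) \<Longrightarrow> (u,v) \<in> H"
  shows "maximal_S_monotone H"
  unfolding maximal_S_monotone_def
proof (intro conjI assms(1) notI)
  assume "\<exists>H'. S_monotone H' \<and> H \<subset> H'"
  then obtain H' y where H': "S_monotone H'" "H \<subseteq> H'" "y \<in> H'" "y \<notin> H" by blast
  have "(fst y, snd y) \<in> H"
    by (rule assms(2)) (use H' in \<open>auto simp: S_monotone_iff\<close>)
  then show False using H' by simp
qed

lemma minty_converse:
  fixes H :: "('a::euclidean_space \<times> 'a) set"
  assumes "S_monotone H" "\<And>z. \<exists>x\<in>H. fst x + snd x = z"
  shows "maximal_S_monotone H"
proof (rule maximal_intro[OF assms(1)])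
  fix u v assume c: "\<And>x. x\<in>H \<Longrightarrow> inner (fst x - u) (snd x - v) \<ge> 0"
  obtain x where x: "x \<in> H" "fst x + snd x = u + v" using assms(2) by blast
  have e: "snd x - v = - (fst x - u)" using x(2) by (simp add: algebra_simps)
  have "inner (fst x - u) (snd x - v) \<ge> 0" by (rule c[OF x(1)])
  then have "inner (fst x - u) (fst x - u) \<le> 0" unfolding e by (simp only: inner_minus_right)
  then have "fst x - u = 0" by (metis inner_gt_zero_iff linorder_not_le)
  then have "x = (u,v)" using e by (cases x) simp
  then show "(u,v) \<in> H" using x(1) by simp
qed

lemma minty_scaled:
  fixes G :: "('a::euclidean_space \<times> 'a) set"
  assumes mx: "maximal_S_monotone G" and ep: "\<epsilon> > 0"
  shows "\<exists>x\<in>G. fst x + \<epsilon> *\<^sub>R snd x = z"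
proof -
  define H where "H = (\<lambda>x. (fst x, \<epsilon> *\<^sub>R snd x)) ` G"
  have "maximal_S_monotone H"
  proof (rule maximal_intro)
    show "S_monotone H" unfolding S_monotone_iff H_def
      using maximal_mono[OF mx] ep
      by (auto simp: scaleR_diff_right[symmetric])
    fix u v assume c: "\<And>x. x\<in>H \<Longrightarrow> inner (fst x - u) (snd x - v) \<ge> 0"
    have "(u, v /\<^sub>R \<epsilon>) \<in> G"
    proof (rule maximal_add[OF mx])
      fix x assume "x \<in> G"
      then have "inner (fst x - u) (\<epsilon> *\<^sub>R snd x - v) \<ge> 0" using c[of "(fst x, \<epsilon> *\<^sub>R snd x)"]
        by (auto simp: H_def)
      moreover have "\<epsilon> *\<^sub>R snd x - v = \<epsilon> *\<^sub>R (snd x - v /\<^sub>R \<epsilon>)" using ep by (simp add: algebra_simps)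
      ultimately show "inner (fst x - u) (snd x - v /\<^sub>R \<epsilon>) \<ge> 0" using ep
        by (simp add: zero_le_mult_iff)
    qed
    then show "(u,v) \<in> H" unfolding H_def using ep by (auto intro!: image_eqI[of _ _ "(u, v /\<^sub>R \<epsilon>)"])
  qed
  from minty[OF this] obtain y where y: "y \<in> H" "fst y + snd y = z" by blast
  then obtain x where "x \<in> G" "y = (fst x, \<epsilon> *\<^sub>R snd x)" unfolding H_def by blast
  then show ?thesis using y(2) by auto
qed

lemma domain_from_bound:
  fixes G :: "('a::euclidean_space \<times> 'a) set"
  assumes mx: "maximal_S_monotone G"
    and bnd: "\<And>\<epsilon> x. 0 < \<epsilon> \<Longrightarrow> \<epsilon> \<le> 1 \<Longrightarrow> x \<in> G \<Longrightarrow> fst x + \<epsilon> *\<^sub>R snd x = u0 \<Longrightarrow> norm (snd x) \<le> K"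
  shows "\<exists>v. (u0, v) \<in> G"
proof -
  define e where "e n = 1 / (real n + 1)" for n :: nat
  have e01: "0 < e n" "e n \<le> 1" for n by (auto simp: e_def divide_simps)
  have "\<forall>n. \<exists>x\<in>G. fst x + e n *\<^sub>R snd x = u0" using minty_scaled[OF mx e01(1)] by blast
  then obtain X where X: "\<And>n. X n \<in> G" "\<And>n. fst (X n) + e n *\<^sub>R snd (X n) = u0" by metis
  have sb: "snd (X n) \<in> cball 0 K" for n using bnd[OF e01 X(1) X(2)] by simp
  obtain s r where sr: "s \<in> cball 0 K" "strict_mono r" "((\<lambda>n. snd (X n)) \<circ> r) \<longlonglongrightarrow> s"
    using seq_compactE[OF compact_imp_seq_compact[OF compact_cball[of 0 K]], of "\<lambda>n. snd (X n)"] sb by blast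
  have e0: "e \<longlonglongrightarrow> 0" unfolding e_def using LIMSEQ_inverse_real_of_nat_add[of 0] by (simp add: inverse_eq_divide add.commute)
  have er: "(e \<circ> r) \<longlonglongrightarrow> 0" using LIMSEQ_subseq_LIMSEQ[OF e0 sr(2)] .
  have fr: "(\<lambda>n. fst (X (r n))) \<longlonglongrightarrow> u0"
  proof -
    have "(\<lambda>n. u0 - e (r n) *\<^sub>R snd (X (r n))) \<longlonglongrightarrow> u0 - 0 *\<^sub>R s"
      using er sr(3) by (intro tendsto_intros) (auto simp: o_def)
    moreover have "fst (X (r n)) = u0 - e (r n) *\<^sub>R snd (X (r n))" for n using X(2)[of "r n"] by (simp add: algebra_simps)
    ultimately show ?thesis by simp
  qed
  have "(u0, s) \<in> G"
  proof (rule maximal_add[OF mx])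
    fix x assume x: "x \<in> G"
    have "(\<lambda>n. inner (fst x - fst (X (r n))) (snd x - snd (X (r n)))) \<longlonglongrightarrow> inner (fst x - u0) (snd x - s)"
      using fr sr(3) by (intro tendsto_intros) (auto simp: o_def)
    moreover have "inner (fst x - fst (X (r n))) (snd x - snd (X (r n))) \<ge> 0" for n
      by (rule maximal_mono[OF mx x X(1)])
    ultimately show "inner (fst x - u0) (snd x - s) \<ge> 0" using LIMSEQ_le_const by blast
  qed
  then show ?thesis by blast
qed



definition fval :: "('a::euclidean_space \<times> 'a) \<Rightarrow> ('a \<times> 'a) \<Rightarrow> real" where
  "fval x y = Sform x y - Sform x x / 2"

lemma fval_eq: "fval x (u,v) = inner (snd x) u + inner (fst x) v - inner (fst x) (snd x)"
  unfolding fval_def Sform_self by (simp add: Sform_def)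

lemma psi_fval: "psi G y = (SUP x\<in>G. ereal (fval x y))"
  unfolding psi_def fval_def ..

definition finD :: "('a::euclidean_space \<times> 'a) set \<Rightarrow> 'a \<Rightarrow> bool" where
  "finD G u \<longleftrightarrow> (\<exists>v K. \<forall>x\<in>G. fval x (u,v) \<le> K)"

lemma psi_finite_finD:
  assumes "psi G (u,v) < \<infinity>" shows "finD G u"
proof -
  obtain K where K: "psi G (u,v) \<le> ereal K" using assms by (cases "psi G (u,v)") auto
  have "fval x (u,v) \<le> K" if "x \<in> G" for x
  proof -
    have "ereal (fval x (u,v)) \<le> psi G (u,v)" unfolding psi_fval using that by (rule SUP_upper)
    then have "ereal (fval x (u,v)) \<le> ereal K" using K by (rule order_trans)
    then show ?thesis by simp
  qed
  then show ?thesis unfolding finD_def by blast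
qed

lemma convex_finD: "convex {u. finD G u}"
proof (rule convexI)
  fix u1 u2 and a b :: real
  assume u12: "u1 \<in> {u. finD G u}" "u2 \<in> {u. finD G u}" and ab: "0 \<le> a" "0 \<le> b" "a + b = 1"
  obtain v1 K1 where k1: "\<forall>x\<in>G. fval x (u1,v1) \<le> K1" using u12(1) unfolding finD_def by blast
  obtain v2 K2 where k2: "\<forall>x\<in>G. fval x (u2,v2) \<le> K2" using u12(2) unfolding finD_def by blast
  have k: "\<And>x. x\<in>G \<Longrightarrow> fval x (u1,v1) \<le> K1" "\<And>x. x\<in>G \<Longrightarrow> fval x (u2,v2) \<le> K2" using k1 k2 by auto
  have "fval x (a *\<^sub>R u1 + b *\<^sub>R u2, a *\<^sub>R v1 + b *\<^sub>R v2) \<le> a * K1 + b * K2" if "x \<in> G" for x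
  proof -
    have "fval x (a *\<^sub>R u1 + b *\<^sub>R u2, a *\<^sub>R v1 + b *\<^sub>R v2) = a * fval x (u1,v1) + b * fval x (u2,v2)"
      unfolding fval_eq using ab(3)
      by (simp add: inner_add_right algebra_simps) (metis add_diff_cancel_left' distrib_right mult_1)
    also have "\<dots> \<le> a * K1 + b * K2" using k[OF that] ab by (intro add_mono mult_left_mono) auto
    finally show ?thesis .
  qed
  then show "a *\<^sub>R u1 + b *\<^sub>R u2 \<in> {u. finD G u}" unfolding finD_def by blast
qed

lemma finD_inner_bound:
  fixes G :: "('a::euclidean_space \<times> 'a) set"
  assumes k: "\<And>x. x\<in>G \<Longrightarrow> fval x (u,v) \<le> K"
    and x: "x \<in> G" "fst x + \<epsilon> *\<^sub>R snd x = u0" and e: "0 < \<epsilon>" "\<epsilon> \<le> 1"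
  shows "inner (snd x) (u - u0) \<le> K - inner u0 v + (norm v)\<^sup>2 / 4"
proof -
  obtain r s where xe: "x = (r,s)" by (cases x)
  have r: "r = u0 - \<epsilon> *\<^sub>R s" using x(2) xe by (simp add: algebra_simps)
  have q: "inner s v - inner s s \<le> (norm v)\<^sup>2 / 4"
  proof -
    have "0 \<le> inner (s - v /\<^sub>R 2) (s - v /\<^sub>R 2)" by simp
    then show ?thesis by (simp add: inner_diff_left inner_diff_right inner_commute power2_norm_eq_inner algebra_simps)
  qed
  have "inner s (u - u0) = fval x (u,v) - inner u0 v + \<epsilon> * (inner s v - inner s s)"
    unfolding fval_eq xe r by (simp add: inner_diff_left inner_diff_right inner_commute algebra_simps)
  also have "\<dots> \<le> K - inner u0 v + (norm v)\<^sup>2 / 4"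
  proof -
    have "\<epsilon> * (inner s v - inner s s) \<le> \<epsilon> * ((norm v)\<^sup>2 / 4)" using q e by (intro mult_left_mono) auto
    also have "\<dots> \<le> (norm v)\<^sup>2 / 4" using e by (simp add: mult_left_le_one_le)
    finally show ?thesis using k[OF x(1)] by linarith
  qed
  finally show ?thesis using xe by simp
qed

lemma finD_all_domain:
  fixes G :: "('a::euclidean_space \<times> 'a) set"
  assumes mx: "maximal_S_monotone G" and all: "\<And>u. finD G u"
  shows "\<exists>v. (u0, v) \<in> G"
proof -
  have "\<forall>u. \<exists>vK. \<forall>x\<in>G. fval x (u, fst vK) \<le> snd vK" using all unfolding finD_def by auto
  then obtain VK where VK: "\<And>u x. x \<in> G \<Longrightarrow> fval x (u, fst (VK u)) \<le> snd (VK u)" by metis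
  define C where "C u = snd (VK u) - inner u0 (fst (VK u)) + (norm (fst (VK u)))\<^sup>2 / 4" for u
  define K where "K = (\<Sum>b\<in>Basis. \<bar>C (u0 + b)\<bar> + \<bar>C (u0 - b)\<bar>)"
  show ?thesis
  proof (rule domain_from_bound[OF mx])
    fix \<epsilon> x assume e: "0 < \<epsilon>" "\<epsilon> \<le> 1" and x: "x \<in> G" "fst x + \<epsilon> *\<^sub>R snd x = u0"
    have ib: "\<bar>inner (snd x) b\<bar> \<le> \<bar>C (u0 + b)\<bar> + \<bar>C (u0 - b)\<bar>" for b
    proof -
      have "inner (snd x) ((u0 + b) - u0) \<le> C (u0 + b)"
        unfolding C_def by (rule finD_inner_bound[OF VK x e])
      moreover have "inner (snd x) ((u0 - b) - u0) \<le> C (u0 - b)"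
        unfolding C_def by (rule finD_inner_bound[OF VK x e])
      ultimately show ?thesis by (simp add: inner_minus_right)
    qed
    have "norm (snd x) \<le> (\<Sum>b\<in>Basis. \<bar>inner (snd x) b\<bar>)" by (rule norm_le_l1)
    also have "\<dots> \<le> K" unfolding K_def by (rule sum_mono) (rule ib)
    finally show "norm (snd x) \<le> K" .
  qed
qed



lemma fval_cont: "continuous_on UNIV (\<lambda>y. fval x y)"
  unfolding fval_def Sform_def by (intro continuous_intros)

lemma open_ereal_less: "open {y. c < ereal (fval x y)}"
proof (cases c)
  case (real r)
  have "open {y. r < fval x y}" by (rule open_Collect_less) (auto intro: fval_cont continuous_intros)
  then show ?thesis using real by simp
next
  case PInf then show ?thesis by simp
next
  case MInf then show ?thesis by simp
qed

lemma psi_borel: "psi G \<in> borel_measurable borel"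
proof (rule borel_measurableI_greater)
  fix c :: ereal
  have "{y \<in> space borel. c < psi G y} = (\<Union>x\<in>G. {y. c < ereal (fval x y)})"
    by (auto simp: psi_fval less_SUP_iff)
  moreover have "open (\<Union>x\<in>G. {y. c < ereal (fval x y)})" using open_ereal_less by blast
  ultimately show "{y \<in> space borel. c < psi G y} \<in> sets borel" by simp
qed

lemma psiY_meas:
  assumes "U \<in> borel_measurable M" "V \<in> borel_measurable M"
  shows "(\<lambda>w. psi G (U w, V w)) \<in> borel_measurable M"
proof -
  have "(\<lambda>w. (U w, V w)) \<in> borel_measurable M" using assms by (rule borel_measurable_Pair)
  from measurable_compose[OF this psi_borel] show ?thesis by (simp add: o_def)
qed

lemma eexp_top:
  assumes "(\<integral>\<^sup>+ w. e2ennreal (f w) \<partial>M) = \<infinity>" shows "eexpectation M f = \<infinity>"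
  using assms unfolding eexpectation_def by (cases "enn2ereal (\<integral>\<^sup>+ w. e2ennreal (- f w) \<partial>M)") auto

lemma eexp_fin:
  assumes "(\<integral>\<^sup>+ w. e2ennreal (f w) \<partial>M) < \<infinity>" shows "eexpectation M f < \<infinity>"
proof -
  obtain a where "(\<integral>\<^sup>+ w. e2ennreal (f w) \<partial>M) = ennreal a" "0 \<le> a" using assms
    by (cases "(\<integral>\<^sup>+ w. e2ennreal (f w) \<partial>M)") auto
  then show ?thesis unfolding eexpectation_def
    by (cases "enn2ereal (\<integral>\<^sup>+ w. e2ennreal (- f w) \<partial>M)") auto
qed

definition IdG :: "('a::euclidean_space \<times> 'a) set" where "IdG = range (\<lambda>r. (r,r))"

lemma IdG_maximal: "maximal_S_monotone (IdG :: ('a::euclidean_space \<times> 'a) set)"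
proof (rule minty_converse)
  show "S_monotone (IdG :: ('a \<times> 'a) set)" unfolding S_monotone_iff IdG_def by auto
  fix z :: 'a
  have "(z /\<^sub>R 2, z /\<^sub>R 2) \<in> IdG" unfolding IdG_def by auto
  moreover have "z /\<^sub>R 2 + z /\<^sub>R 2 = z"
  proof -
    have "z /\<^sub>R 2 + z /\<^sub>R 2 = (z + z) /\<^sub>R 2" by (simp only: scaleR_add_right)
    also have "z + z = 2 *\<^sub>R z" by (simp add: scaleR_2)
    finally show ?thesis by simp
  qed
  ultimately show "\<exists>x\<in>IdG. fst x + snd x = z" by force
qed

lemma psi_IdG_le: "psi IdG (u,v) \<le> ereal ((norm u)\<^sup>2 + (norm v)\<^sup>2)"
  unfolding psi_fval
proof (rule SUP_least)
  fix x :: "'a \<times> 'a" assume "x \<in> IdG"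
  then obtain r where x: "x = (r,r)" unfolding IdG_def by auto
  have "fval x (u,v) = inner r (u + v) - inner r r" unfolding x fval_eq by (simp add: inner_add_right)
  also have "\<dots> \<le> (norm (u+v))\<^sup>2 / 4"
  proof -
    have "0 \<le> inner (r - (u+v) /\<^sub>R 2) (r - (u+v) /\<^sub>R 2)" by simp
    then show ?thesis by (simp add: inner_diff_left inner_diff_right inner_commute power2_norm_eq_inner algebra_simps)
  qed
  also have "\<dots> \<le> (norm u)\<^sup>2 + (norm v)\<^sup>2"
  proof -
    have "(norm (u+v))\<^sup>2 \<le> (norm u + norm v)\<^sup>2" by (intro power_mono norm_triangle_ineq) simp
    also have "\<dots> \<le> 2 * ((norm u)\<^sup>2 + (norm v)\<^sup>2)"
    proof -
      have "(norm u + norm v)\<^sup>2 + (norm u - norm v)\<^sup>2 = 2*((norm u)\<^sup>2 + (norm v)\<^sup>2)"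
        by (simp add: power2_eq_square algebra_simps)
      then show ?thesis using zero_le_power2[of "norm u - norm v"] by linarith
    qed
    finally have "(norm (u+v))\<^sup>2 \<le> 2 * ((norm u)\<^sup>2 + (norm v)\<^sup>2)" .
    then have "(norm (u+v))\<^sup>2 \<le> 2 * (norm u)\<^sup>2 + 2 * (norm v)\<^sup>2" by (simp add: algebra_simps)
    moreover have "0 \<le> (norm u)\<^sup>2" "0 \<le> (norm v)\<^sup>2" by simp_all
    ultimately show ?thesis by linarith
  qed
  finally show "ereal (fval x (u,v)) \<le> ereal ((norm u)\<^sup>2 + (norm v)\<^sup>2)" by simp
qed

lemma eexp_IdG_fin:
  assumes "integrable M (\<lambda>w. (norm (U w))\<^sup>2)" "integrable M (\<lambda>w. (norm (V w))\<^sup>2)"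
  shows "eexpectation M (\<lambda>w. psi IdG (U w, V w)) < \<infinity>"
proof (rule eexp_fin)
  have "(\<integral>\<^sup>+ w. e2ennreal (psi IdG (U w, V w)) \<partial>M) \<le> (\<integral>\<^sup>+ w. ennreal ((norm (U w))\<^sup>2) + ennreal ((norm (V w))\<^sup>2) \<partial>M)"
  proof (rule nn_integral_mono)
    fix w
    have "e2ennreal (psi IdG (U w, V w)) \<le> e2ennreal (ereal ((norm (U w))\<^sup>2 + (norm (V w))\<^sup>2))"
      by (rule e2ennreal_mono[OF psi_IdG_le])
    then show "e2ennreal (psi IdG (U w, V w)) \<le> ennreal ((norm (U w))\<^sup>2) + ennreal ((norm (V w))\<^sup>2)" by simp
  qed
  also have "\<dots> = (\<integral>\<^sup>+ w. ennreal ((norm (U w))\<^sup>2) \<partial>M) + (\<integral>\<^sup>+ w. ennreal ((norm (V w))\<^sup>2) \<partial>M)"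
    using assms by (intro nn_integral_add) auto
  also have "\<dots> < \<infinity>" using integrableD(2)[OF assms(1)] integrableD(2)[OF assms(2)]
    by (simp add: less_top)
  finally show "(\<integral>\<^sup>+ w. e2ennreal (psi IdG (U w, V w)) \<partial>M) < \<infinity>" .
qed



lemma part_a:
  fixes M :: "'s measure" and U V :: "'s \<Rightarrow> 'a::euclidean_space"
  assumes "prob_space M"
    and Um: "U \<in> borel_measurable M" and Vm: "V \<in> borel_measurable M"
    and iU: "integrable M (\<lambda>w. (norm (U w))\<^sup>2)"
    and iV: "integrable M (\<lambda>w. (norm (V w))\<^sup>2)"
    and hull: "convex hull (law_support M U) = UNIV"
    and opt: "dual_optimal M U V G"
  shows "{u. \<exists>v. (u, v) \<in> G} = UNIV"
proof -
  have mx: "maximal_S_monotone G" using opt unfolding dual_optimal_def by blast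
  have "eexpectation M (\<lambda>w. psi G (U w, V w)) \<le> eexpectation M (\<lambda>w. psi IdG (U w, V w))"
    using opt IdG_maximal unfolding dual_optimal_def by blast
  also have "\<dots> < \<infinity>" by (rule eexp_IdG_fin[OF iU iV])
  finally have fin: "eexpectation M (\<lambda>w. psi G (U w, V w)) < \<infinity>" .
  have P: "(\<integral>\<^sup>+ w. e2ennreal (psi G (U w, V w)) \<partial>M) \<noteq> \<infinity>"
    using eexp_top[where f="\<lambda>w. psi G (U w, V w)" and M=M] fin by auto
  have meas: "(\<lambda>w. e2ennreal (psi G (U w, V w))) \<in> borel_measurable M"
    using measurable_compose[OF psiY_meas[OF Um Vm] measurable_e2ennreal] by (simp add: o_def)
  have "AE w in M. e2ennreal (psi G (U w, V w)) \<noteq> \<infinity>" by (rule nn_integral_PInf_AE[OF meas P])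
  then have AED: "AE w in M. finD G (U w)"
  proof (rule eventually_mono)
    fix w assume "e2ennreal (psi G (U w, V w)) \<noteq> \<infinity>"
    then have "psi G (U w, V w) < \<infinity>" by (cases "psi G (U w, V w)") auto
    then show "finD G (U w)" by (rule psi_finite_finD)
  qed
  define D where "D = {u. finD G u}"
  have cD: "convex D" unfolding D_def by (rule convex_finD)
  have supp: "law_support M U \<subseteq> closure D"
  proof
    fix x assume x: "x \<in> law_support M U"
    show "x \<in> closure D"
    proof (rule ccontr)
      assume "x \<notin> closure D"
      then obtain e where e: "e > 0" "ball x e \<subseteq> - closure D"
        using open_contains_ball[of "- closure D"] by auto
      have "AE w in M. \<not> (U w \<in> ball x e)"
        using AED
      proof (rule eventually_mono)
        fix w assume "finD G (U w)"
        then have "U w \<in> closure D" using closure_subset[of D] by (auto simp: D_def)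
        then show "\<not> (U w \<in> ball x e)" using e by auto
      qed
      then have "emeasure M {w \<in> space M. U w \<in> ball x e} = 0" by (rule emeasure_eq_0_AE)
      moreover have "emeasure (distr M borel U) (ball x e) = emeasure M (U -` ball x e \<inter> space M)"
        by (rule emeasure_distr[OF Um]) simp
      moreover have "U -` ball x e \<inter> space M = {w \<in> space M. U w \<in> ball x e}" by auto
      moreover have "emeasure (distr M borel U) (ball x e) > 0" using x e(1) unfolding law_support_def by blast
      ultimately show False by simp
    qed
  qed
  have "convex hull (law_support M U) \<subseteq> closure D"
    by (rule hull_minimal[OF supp]) (rule convex_closure[OF cD])
  then have "closure D = UNIV" using hull by auto
  then have "interior D = UNIV" using convex_interior_closure[OF cD] by simp
  then have "D = UNIV" using interior_subset[of D] by auto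
  then have "\<And>u. finD G u" unfolding D_def by auto
  then show ?thesis using finD_all_domain[OF mx] by auto
qed



lemma eexp_mono_AE:
  assumes "AE w in M. f w \<le> g w"
  shows "eexpectation M f \<le> eexpectation M g"
proof -
  have "(\<integral>\<^sup>+ w. e2ennreal (f w) \<partial>M) \<le> (\<integral>\<^sup>+ w. e2ennreal (g w) \<partial>M)"
    by (rule nn_integral_mono_AE) (use assms in \<open>auto elim!: eventually_mono intro: e2ennreal_mono\<close>)
  moreover have "(\<integral>\<^sup>+ w. e2ennreal (- g w) \<partial>M) \<le> (\<integral>\<^sup>+ w. e2ennreal (- f w) \<partial>M)"
    by (rule nn_integral_mono_AE) (use assms in \<open>auto elim!: eventually_mono intro: e2ennreal_mono\<close>)
  ultimately show ?thesis unfolding eexpectation_def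
    by (intro ereal_minus_mono) (auto simp: less_eq_ennreal.rep_eq[symmetric])
qed

lemma unique_scaled:
  fixes G :: "('a::euclidean_space \<times> 'a) set"
  assumes mx: "maximal_S_monotone G" and e: "\<epsilon> > 0" and x: "x \<in> G" "x' \<in> G"
    and eq: "fst x + \<epsilon> *\<^sub>R snd x = fst x' + \<epsilon> *\<^sub>R snd x'"
  shows "x = x'"
proof -
  have d: "fst x - fst x' = - \<epsilon> *\<^sub>R (snd x - snd x')" using eq by (simp add: algebra_simps)
  have "inner (fst x - fst x') (snd x - snd x') \<ge> 0" by (rule maximal_mono[OF mx x])
  then have "\<epsilon> * inner (snd x - snd x') (snd x - snd x') \<le> 0" unfolding d by simp
  then have "inner (snd x - snd x') (snd x - snd x') \<le> 0" using e by (simp add: mult_le_0_iff)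
  then have "snd x = snd x'" by (metis inner_gt_zero_iff linorder_not_le right_minus_eq)
  then show ?thesis using d by (simp add: prod_eq_iff)
qed

lemma scaled_cont:
  fixes G :: "('a::euclidean_space \<times> 'a) set"
  assumes mx: "maximal_S_monotone G" and x: "x \<in> G" "x' \<in> G"
    and t: "0 \<le> t" "0 \<le> t'"
    and eq: "fst x + (1 + t) *\<^sub>R snd x = z" "fst x' + (1 + t') *\<^sub>R snd x' = z"
  shows "norm (snd x - snd x') \<le> \<bar>t' - t\<bar> * norm (snd x')"
proof -
  define d where "d = snd x - snd x'"
  have r: "fst x - fst x' = - (1 + t) *\<^sub>R d + (t' - t) *\<^sub>R snd x'"
    using eq unfolding d_def by (simp add: algebra_simps)
  have "inner (fst x - fst x') (snd x - snd x') \<ge> 0" by (rule maximal_mono[OF mx x])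
  then have "(1 + t) * inner d d \<le> (t' - t) * inner (snd x') d"
    unfolding r d_def[symmetric] by (simp add: inner_add_left algebra_simps)
  also have "\<dots> \<le> \<bar>(t' - t) * inner (snd x') d\<bar>" by (rule abs_ge_self)
  also have "\<dots> = \<bar>t' - t\<bar> * \<bar>inner (snd x') d\<bar>" by (rule abs_mult)
  also have "\<dots> \<le> \<bar>t' - t\<bar> * (norm (snd x') * norm d)"
    by (rule mult_left_mono[OF Cauchy_Schwarz_ineq2]) simp
  finally have a: "(1 + t) * (norm d)\<^sup>2 \<le> \<bar>t' - t\<bar> * norm (snd x') * norm d"
    by (simp add: power2_norm_eq_inner mult.assoc)
  show ?thesis
  proof (cases "norm d = 0")
    case True then show ?thesis by (simp add: d_def)
  next
    case False
    then have nd: "norm d > 0" by simp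
    have "norm d * norm d \<le> (1 + t) * (norm d * norm d)" using t by (simp add: mult_le_cancel_right1)
    also have "\<dots> \<le> (\<bar>t' - t\<bar> * norm (snd x')) * norm d" using a by (simp add: power2_eq_square mult.assoc)
    finally have "norm d * norm d \<le> (\<bar>t' - t\<bar> * norm (snd x')) * norm d" .
    then show ?thesis using nd unfolding d_def by (simp add: mult_le_cancel_right)
  qed
qed

definition trunc :: "('a::euclidean_space \<times> 'a) set \<Rightarrow> real \<Rightarrow> ('a \<times> 'a) set" where
  "trunc G R = {(fst x + t *\<^sub>R snd x, snd x) | x t. x \<in> G \<and> norm (snd x) \<le> R \<and> 0 \<le> t \<and> (t = 0 \<or> norm (snd x) = R)}"

lemma inner_le_sq:
  fixes a b :: "'a::real_inner"
  assumes "norm a = R" "norm b \<le> R"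
  shows "inner a b \<le> inner a a"
proof -
  have "inner a b \<le> norm a * norm b" by (rule norm_cauchy_schwarz)
  also have "\<dots> \<le> norm a * norm a" using assms by (intro mult_left_mono) auto
  also have "\<dots> = inner a a" by (simp add: power2_eq_square[symmetric] power2_norm_eq_inner)
  finally show ?thesis .
qed

lemma trunc_pair_nonneg:
  fixes a b :: "'a::real_inner"
  assumes "0 \<le> t" "t = 0 \<or> norm a = R" "norm b \<le> R"
  shows "t * (inner a a - inner a b) \<ge> 0"
proof (cases "t = 0")
  case False
  then have "norm a = R" using assms(2) by simp
  then show ?thesis using assms inner_le_sq[of a R b] by (auto intro!: mult_nonneg_nonneg)
qed simp

lemma trunc_mono:
  fixes G :: "('a::euclidean_space \<times> 'a) set"
  assumes mx: "maximal_S_monotone G"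
  shows "S_monotone (trunc G R)"
  unfolding S_monotone_iff
proof (intro ballI)
  fix y1 y2 assume "y1 \<in> trunc G R" "y2 \<in> trunc G R"
  then obtain x1 t1 x2 t2 where y: "y1 = (fst x1 + t1 *\<^sub>R snd x1, snd x1)" "y2 = (fst x2 + t2 *\<^sub>R snd x2, snd x2)"
    and x1: "x1 \<in> G" "norm (snd x1) \<le> R" "0 \<le> t1" "t1 = 0 \<or> norm (snd x1) = R"
    and x2: "x2 \<in> G" "norm (snd x2) \<le> R" "0 \<le> t2" "t2 = 0 \<or> norm (snd x2) = R"
    unfolding trunc_def by blast
  have "inner (fst y1 - fst y2) (snd y1 - snd y2) = inner (fst x1 - fst x2) (snd x1 - snd x2)
      + t1 * (inner (snd x1) (snd x1) - inner (snd x1) (snd x2))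
      + t2 * (inner (snd x2) (snd x2) - inner (snd x2) (snd x1))"
    unfolding y by (simp add: inner_add_left inner_diff_left inner_diff_right inner_commute algebra_simps)
  moreover have "inner (fst x1 - fst x2) (snd x1 - snd x2) \<ge> 0" by (rule maximal_mono[OF mx x1(1) x2(1)])
  moreover have "t1 * (inner (snd x1) (snd x1) - inner (snd x1) (snd x2)) \<ge> 0"
    using x1 x2 by (intro trunc_pair_nonneg) auto
  moreover have "t2 * (inner (snd x2) (snd x2) - inner (snd x2) (snd x1)) \<ge> 0"
    using x1 x2 by (intro trunc_pair_nonneg) auto
  ultimately show "inner (fst y1 - fst y2) (snd y1 - snd y2) \<ge> 0" by linarith
qed

lemma trunc_bounded: "y \<in> trunc G R \<Longrightarrow> norm (snd y) \<le> R"
  unfolding trunc_def by auto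

lemma trunc_psi:
  fixes G :: "('a::euclidean_space \<times> 'a) set"
  assumes "norm v \<le> R"
  shows "psi (trunc G R) (u,v) \<le> psi G (u,v)"
  unfolding psi_fval
proof (rule SUP_least)
  fix y assume "y \<in> trunc G R"
  then obtain x t where y: "y = (fst x + t *\<^sub>R snd x, snd x)"
    and x: "x \<in> G" "norm (snd x) \<le> R" "0 \<le> t" "t = 0 \<or> norm (snd x) = R"
    unfolding trunc_def by blast
  have "fval y (u,v) = fval x (u,v) - t * (inner (snd x) (snd x) - inner (snd x) v)"
    unfolding y fval_eq by (simp add: inner_add_left inner_commute algebra_simps)
  also have "\<dots> \<le> fval x (u,v)" using trunc_pair_nonneg[OF x(3) x(4) assms] by linarith
  finally have "ereal (fval y (u,v)) \<le> ereal (fval x (u,v))" by simp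
  also have "\<dots> \<le> (SUP x\<in>G. ereal (fval x (u,v)))" using x(1) by (rule SUP_upper)
  finally show "ereal (fval y (u,v)) \<le> (SUP x\<in>G. ereal (fval x (u,v)))" .
qed

lemma trunc_memI:
  "x \<in> G \<Longrightarrow> norm (snd x) \<le> R \<Longrightarrow> 0 \<le> t \<Longrightarrow> (t = 0 \<or> norm (snd x) = R)
    \<Longrightarrow> (fst x + t *\<^sub>R snd x, snd x) \<in> trunc G R"
  unfolding trunc_def by blast

lemma trunc_surj:
  fixes G :: "('a::euclidean_space \<times> 'a) set"
  assumes mx: "maximal_S_monotone G" and x1: "x1 \<in> G" "norm (snd x1) < R"
  shows "\<exists>y\<in>trunc G R. fst y + snd y = z"
proof -
  define X where "X t = (SOME x. x \<in> G \<and> fst x + (1 + t) *\<^sub>R snd x = z)" for t :: real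
  have X: "X t \<in> G \<and> fst (X t) + (1+t) *\<^sub>R snd (X t) = z" if "0 \<le> t" for t
    unfolding X_def
  proof (rule someI_ex)
    have "1 + t > 0" using that by simp
    from minty_scaled[OF mx this, of z]
    show "\<exists>x. x \<in> G \<and> fst x + (1+t) *\<^sub>R snd x = z" by blast
  qed
  define f where "f t = norm (snd (X t))" for t
  have cont: "continuous_on {0..} (\<lambda>t. snd (X t))"
    unfolding continuous_on_iff
  proof (intro ballI allI impI)
    fix \<tau> e :: real assume tau: "\<tau> \<in> {0..}" and e: "e > 0"
    define N where "N = norm (snd (X \<tau>))"
    define d where "d = e / (N + 1)"
    have N0: "N \<ge> 0" by (simp add: N_def)
    have d0: "d > 0" using e N0 by (simp add: d_def)
    have "dist (snd (X t)) (snd (X \<tau>)) < e" if t: "t \<in> {0..}" "dist t \<tau> < d" for t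
    proof -
      have "dist (snd (X t)) (snd (X \<tau>)) \<le> \<bar>\<tau> - t\<bar> * N"
        unfolding dist_norm N_def using t tau X[of t] X[of \<tau>]
        by (intro scaled_cont[OF mx, of _ _ t \<tau> z]) auto
      also have "\<dots> \<le> d * N" using t(2) N0 by (intro mult_right_mono) (auto simp: dist_real_def)
      also have "\<dots> < e"
      proof -
        have "d * N = e * (N / (N + 1))" by (simp add: d_def)
        also have "\<dots> < e * 1" using e N0 by (intro mult_strict_left_mono) auto
        finally show ?thesis by simp
      qed
      finally show ?thesis .
    qed
    then show "\<exists>d>0. \<forall>t\<in>{0..}. dist t \<tau> < d \<longrightarrow> dist (snd (X t)) (snd (X \<tau>)) < e"
      using d0 by blast
  qed
  have contf: "continuous_on {0..T} f" for T
    unfolding f_def by (rule continuous_on_norm) (rule continuous_on_subset[OF cont], auto)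
  define b where "b = norm (snd x1)"
  define c where "c = norm (z - fst x1)"
  define T where "T = 2 * c / (R - b)"
  have Rb: "R - b > 0" using x1(2) by (simp add: b_def)
  have c0: "c \<ge> 0" by (simp add: c_def)
  have T0: "T \<ge> 0" using Rb c0 by (simp add: T_def)
  have fT: "f T \<le> R"
  proof (rule ccontr)
    assume "\<not> f T \<le> R"
    then have aR: "f T > R" by simp
    define a where "a = f T"
    define s where "s = snd (X T)"
    have XT: "X T \<in> G" "fst (X T) = z - (1+T) *\<^sub>R s" using X[OF T0] by (auto simp: s_def algebra_simps)
    have "inner (fst (X T) - fst x1) (s - snd x1) \<ge> 0" unfolding s_def by (rule maximal_mono[OF mx XT(1) x1(1)])
    then have i1: "(1+T) * inner s (s - snd x1) \<le> inner (z - fst x1) (s - snd x1)"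
      unfolding XT(2) by (simp add: inner_diff_left algebra_simps)
    have i2: "inner (z - fst x1) (s - snd x1) \<le> c * (a + b)"
    proof -
      have "inner (z - fst x1) (s - snd x1) \<le> c * norm (s - snd x1)" unfolding c_def by (rule norm_cauchy_schwarz)
      also have "\<dots> \<le> c * (a + b)" using c0 norm_triangle_ineq4[of s "snd x1"]
        by (intro mult_left_mono) (auto simp: a_def s_def f_def b_def)
      finally show ?thesis .
    qed
    have i3: "a * (R - b) \<le> inner s (s - snd x1)"
    proof -
      have "inner s (snd x1) \<le> a * b" unfolding a_def f_def b_def s_def by (rule norm_cauchy_schwarz)
      moreover have "inner s s = a * a" by (simp add: a_def f_def s_def power2_eq_square[symmetric] power2_norm_eq_inner)
      moreover have "a * (R - b) \<le> a * (a - b)"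
      proof -
        have "0 \<le> a" by (simp add: a_def f_def)
        moreover have "R - b \<le> a - b" using aR unfolding a_def by linarith
        ultimately show ?thesis by (intro mult_left_mono)
      qed
      ultimately show ?thesis by (simp add: inner_diff_right algebra_simps)
    qed
    have a0: "a > 0" using aR Rb b_def a_def by (smt (verit) norm_ge_zero)
    have "(1+T) * (a * (R - b)) \<le> (1+T) * inner s (s - snd x1)" using i3 T0 by (intro mult_left_mono) auto
    also have "\<dots> \<le> c * (a + b)" using i1 i2 by linarith
    also have "\<dots> \<le> c * (2 * a)"
    proof -
      have "b \<le> a" using aR Rb unfolding a_def by linarith
      then show ?thesis using c0 by (intro mult_left_mono) auto
    qed
    finally have "a * ((1+T) * (R - b)) \<le> a * (2 * c)" by (simp add: algebra_simps)
    then have "(1+T) * (R - b) \<le> 2 * c" using a0 by simp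
    moreover have "(1+T) * (R - b) = (R - b) + 2 * c"
    proof -
      have "T * (R - b) = 2 * c" using Rb by (simp add: T_def)
      then show ?thesis by (simp add: algebra_simps)
    qed
    ultimately show False using Rb by linarith
  qed
  show ?thesis
  proof (cases "f 0 \<le> R")
    case True
    have "(fst (X 0) + 0 *\<^sub>R snd (X 0), snd (X 0)) \<in> trunc G R"
      using X[of 0] True by (intro trunc_memI) (auto simp: f_def)
    moreover have "fst (X 0) + snd (X 0) = z" using X[of 0] by simp
    ultimately show ?thesis by force
  next
    case False
    obtain t where t: "0 \<le> t" "t \<le> T" "f t = R"
      using IVT2'[of f T R 0, OF fT _ T0 contf] False by auto
    have "(fst (X t) + t *\<^sub>R snd (X t), snd (X t)) \<in> trunc G R"
      using X[of t] t by (intro trunc_memI) (auto simp: f_def)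
    moreover have "fst (X t) + t *\<^sub>R snd (X t) + snd (X t) = z" using X[OF t(1)] by (simp add: algebra_simps)
    ultimately show ?thesis by force
  qed
qed

lemma trunc_maximal:
  fixes G :: "('a::euclidean_space \<times> 'a) set"
  assumes mx: "maximal_S_monotone G" and x1: "x1 \<in> G" "norm (snd x1) < R"
  shows "maximal_S_monotone (trunc G R)"
  by (rule minty_converse[OF trunc_mono[OF mx]]) (rule trunc_surj[OF mx x1])

lemma trunc_full:
  fixes G :: "('a::euclidean_space \<times> 'a) set"
  assumes mx: "maximal_S_monotone G" and x1: "x1 \<in> G" "norm (snd x1) < R"
  shows "{u. \<exists>v. (u,v) \<in> trunc G R} = UNIV"
proof -
  have "\<exists>v. (u,v) \<in> trunc G R" for u
    by (rule domain_from_bound[OF trunc_maximal[OF mx x1], of u R]) (rule trunc_bounded)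
  then show ?thesis by auto
qed



lemma fval_minus_inner: "fval x (u,v) - inner u v = - inner (fst x - u) (snd x - v)"
  unfolding fval_eq by (simp add: inner_diff_left inner_diff_right inner_commute algebra_simps)

lemma psi_ge_inner:
  fixes G :: "('a::euclidean_space \<times> 'a) set"
  assumes mx: "maximal_S_monotone G"
  shows "ereal (inner u v) \<le> psi G (u,v)"
proof (rule ccontr)
  assume "\<not> ereal (inner u v) \<le> psi G (u,v)"
  then have lt: "psi G (u,v) < ereal (inner u v)" by simp
  have "(u,v) \<in> G"
  proof (rule maximal_add[OF mx])
    fix x assume "x \<in> G"
    then have "ereal (fval x (u,v)) \<le> psi G (u,v)" unfolding psi_fval by (rule SUP_upper)
    then have "ereal (fval x (u,v)) < ereal (inner u v)" using lt by (rule le_less_trans)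
    then have "fval x (u,v) < inner u v" by simp
    then show "inner (fst x - u) (snd x - v) \<ge> 0" using fval_minus_inner[of x u v] by linarith
  qed
  then have "ereal (fval (u,v) (u,v)) \<le> psi G (u,v)" unfolding psi_fval by (rule SUP_upper)
  moreover have "fval (u,v) (u,v) = inner u v" unfolding fval_eq by (simp add: inner_commute)
  ultimately show False using lt by simp
qed

lemma ptwise_ident:
  fixes f :: ereal and h :: real
  assumes "ereal h \<le> f"
  shows "e2ennreal f + ennreal (-h) = e2ennreal (f - ereal h) + ennreal h + e2ennreal (-f)"
proof (cases f)
  case (real a)
  then have ah: "h \<le> a" using assms by simp
  have "ennreal a + ennreal (-h) = ennreal (a - h) + ennreal h + ennreal (-a)"
  proof (cases "a \<ge> 0")
    case True
    then show ?thesis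
    proof (cases "h \<ge> 0")
      case True
      then show ?thesis using \<open>a \<ge> 0\<close> ah
        by (simp add: ennreal_neg ennreal_plus[symmetric] del: ennreal_plus)
    next
      case False
      then show ?thesis using \<open>a \<ge> 0\<close> ah
        by (simp add: ennreal_neg ennreal_plus[symmetric] del: ennreal_plus)
    qed
  next
    case False
    then have "h < 0" using ah by simp
    then show ?thesis using False ah
      by (simp add: ennreal_neg ennreal_plus[symmetric] del: ennreal_plus)
  qed
  then show ?thesis using real by simp
next
  case PInf then show ?thesis by simp
next
  case MInf then show ?thesis using assms by simp
qed

lemma eexp_decomp:
  fixes f :: "'s \<Rightarrow> ereal" and h :: "'s \<Rightarrow> real"
  assumes fm: "f \<in> borel_measurable M" and hi: "integrable M h" and ge: "\<And>w. ereal (h w) \<le> f w"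
  shows "eexpectation M f = enn2ereal (\<integral>\<^sup>+ w. e2ennreal (f w - ereal (h w)) \<partial>M) + ereal (integral\<^sup>L M h)"
proof -
  have hm: "h \<in> borel_measurable M" using hi by auto
  define A where "A = (\<integral>\<^sup>+ w. e2ennreal (f w) \<partial>M)"
  define B where "B = (\<integral>\<^sup>+ w. e2ennreal (- f w) \<partial>M)"
  define P where "P = (\<integral>\<^sup>+ w. ennreal (h w) \<partial>M)"
  define N where "N = (\<integral>\<^sup>+ w. ennreal (- h w) \<partial>M)"
  define F where "F = (\<integral>\<^sup>+ w. e2ennreal (f w - ereal (h w)) \<partial>M)"
  have eq: "A + N = F + P + B"
  proof -
    have "A + N = (\<integral>\<^sup>+ w. e2ennreal (f w) + ennreal (- h w) \<partial>M)"
      unfolding A_def N_def using fm hm by (intro nn_integral_add[symmetric]) auto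
    also have "\<dots> = (\<integral>\<^sup>+ w. e2ennreal (f w - ereal (h w)) + ennreal (h w) + e2ennreal (- f w) \<partial>M)"
      using ptwise_ident[OF ge] by simp
    also have "\<dots> = (\<integral>\<^sup>+ w. e2ennreal (f w - ereal (h w)) + ennreal (h w) \<partial>M) + B"
      unfolding B_def using fm hm by (intro nn_integral_add) auto
    also have "(\<integral>\<^sup>+ w. e2ennreal (f w - ereal (h w)) + ennreal (h w) \<partial>M) = F + P"
      unfolding F_def P_def using fm hm by (intro nn_integral_add) auto
    finally show ?thesis .
  qed
  have Pf: "P \<noteq> \<infinity>" unfolding P_def using integrableD(2)[OF hi] .
  have Nf: "N \<noteq> \<infinity>" unfolding N_def using integrableD(3)[OF hi] .
  have "B \<le> N" unfolding B_def N_def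
  proof (rule nn_integral_mono)
    fix w have "- f w \<le> - ereal (h w)" using ge[of w] by (simp only: ereal_minus_le_minus)
    then have "- f w \<le> ereal (- h w)" by simp
    then have "e2ennreal (- f w) \<le> e2ennreal (ereal (- h w))" by (rule e2ennreal_mono)
    then show "e2ennreal (- f w) \<le> ennreal (- h w)" by simp
  qed
  then have Bf: "B \<noteq> \<infinity>" using Nf by (auto simp: top_unique)
  have int: "integral\<^sup>L M h = enn2real P - enn2real N" unfolding P_def N_def by (rule real_lebesgue_integral_def[OF hi])
  obtain p where p: "P = ennreal p" "0 \<le> p" using Pf by (cases P) auto
  obtain n where n: "N = ennreal n" "0 \<le> n" using Nf by (cases N) auto
  obtain b where b: "B = ennreal b" "0 \<le> b" using Bf by (cases B) auto
  show ?thesis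
  proof (cases F)
    case top
    then have "A + N = \<infinity>" using eq by simp
    then have "A = \<infinity>" using Nf by (simp add: ennreal_add_eq_top)
    then show ?thesis unfolding eexpectation_def A_def[symmetric] B_def[symmetric] F_def[symmetric] using top b
      by simp
  next
    case (real phi)
    then have "A + ennreal n = ennreal (phi + p + b)" using eq p n b by simp
    then have "A \<noteq> \<infinity>" by (auto simp: ennreal_add_eq_top)
    then obtain a where a: "A = ennreal a" "0 \<le> a" by (cases A) auto
    have "ennreal (a + n) = ennreal (phi + p + b)" using eq a p n b real by simp
    then have "a + n = phi + p + b" using a n p b real by (subst (asm) ennreal_inj) auto
    then show ?thesis unfolding eexpectation_def A_def[symmetric] B_def[symmetric] F_def[symmetric] int
      using a b p n real by simp
  qed
qed

definition Phi :: "'s measure \<Rightarrow> ('s \<Rightarrow> 'a::euclidean_space) \<Rightarrow> ('s \<Rightarrow> 'a) \<Rightarrow> ('a \<times> 'a) set \<Rightarrow> ennreal" where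
  "Phi M U V G = (\<integral>\<^sup>+ w. e2ennreal (psi G (U w, V w) - ereal (inner (U w) (V w))) \<partial>M)"

lemma inner_integrable:
  fixes U V :: "'s \<Rightarrow> 'a::euclidean_space"
  assumes Um: "U \<in> borel_measurable M" and Vm: "V \<in> borel_measurable M"
    and iU: "integrable M (\<lambda>w. (norm (U w))\<^sup>2)" and iV: "integrable M (\<lambda>w. (norm (V w))\<^sup>2)"
  shows "integrable M (\<lambda>w. inner (U w) (V w))"
proof (rule Bochner_Integration.integrable_bound)
  show "integrable M (\<lambda>w. (norm (U w))\<^sup>2 + (norm (V w))\<^sup>2)" using iU iV by (rule Bochner_Integration.integrable_add)
  show "(\<lambda>w. inner (U w) (V w)) \<in> borel_measurable M" using Um Vm by (rule borel_measurable_inner)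
  show "AE w in M. norm (inner (U w) (V w)) \<le> norm ((norm (U w))\<^sup>2 + (norm (V w))\<^sup>2)"
  proof (intro AE_I2)
    fix w
    have "\<bar>inner (U w) (V w)\<bar> \<le> norm (U w) * norm (V w)" by (rule Cauchy_Schwarz_ineq2)
    also have "\<dots> \<le> (norm (U w))\<^sup>2 + (norm (V w))\<^sup>2"
    proof -
      have "0 \<le> (norm (U w) - norm (V w))\<^sup>2" by simp
      then have "2 * (norm (U w) * norm (V w)) \<le> (norm (U w))\<^sup>2 + (norm (V w))\<^sup>2"
        by (simp add: power2_eq_square algebra_simps)
      moreover have "0 \<le> norm (U w) * norm (V w)" by simp
      ultimately show ?thesis by linarith
    qed
    finally show "norm (inner (U w) (V w)) \<le> norm ((norm (U w))\<^sup>2 + (norm (V w))\<^sup>2)" by simp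
  qed
qed

lemma eexp_Phi:
  fixes U V :: "'s \<Rightarrow> 'a::euclidean_space"
  assumes Um: "U \<in> borel_measurable M" and Vm: "V \<in> borel_measurable M"
    and iU: "integrable M (\<lambda>w. (norm (U w))\<^sup>2)" and iV: "integrable M (\<lambda>w. (norm (V w))\<^sup>2)"
    and mx: "maximal_S_monotone G"
  shows "eexpectation M (\<lambda>w. psi G (U w, V w)) = enn2ereal (Phi M U V G) + ereal (\<integral>w. inner (U w) (V w) \<partial>M)"
  unfolding Phi_def
  by (rule eexp_decomp[OF psiY_meas[OF Um Vm] inner_integrable[OF Um Vm iU iV] psi_ge_inner[OF mx]])

lemma eexp_cmp:
  fixes U V :: "'s \<Rightarrow> 'a::euclidean_space"
  assumes Um: "U \<in> borel_measurable M" and Vm: "V \<in> borel_measurable M"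
    and iU: "integrable M (\<lambda>w. (norm (U w))\<^sup>2)" and iV: "integrable M (\<lambda>w. (norm (V w))\<^sup>2)"
    and mx: "maximal_S_monotone G" "maximal_S_monotone H" and le: "Phi M U V G \<le> Phi M U V H"
  shows "eexpectation M (\<lambda>w. psi G (U w, V w)) \<le> eexpectation M (\<lambda>w. psi H (U w, V w))"
  unfolding eexp_Phi[OF Um Vm iU iV mx(1)] eexp_Phi[OF Um Vm iU iV mx(2)]
  using le by (intro add_right_mono) (simp add: less_eq_ennreal.rep_eq[symmetric])



definition Xf :: "('a::euclidean_space \<times> 'a) set \<Rightarrow> 'a \<Rightarrow> 'a \<times> 'a" where
  "Xf G p = (THE x. x \<in> G \<and> fst x + snd x = p)"

lemma Xf:
  fixes G :: "('a::euclidean_space \<times> 'a) set"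
  assumes mx: "maximal_S_monotone G"
  shows "Xf G p \<in> G" "fst (Xf G p) + snd (Xf G p) = p"
proof -
  have "\<exists>!x. x \<in> G \<and> fst x + snd x = p"
  proof -
    obtain x where "x \<in> G" "fst x + snd x = p" using minty[OF mx] by blast
    moreover have "y = x" if "y \<in> G" "fst y + snd y = p" for y
      using unique_scaled[OF mx _ that(1) \<open>x \<in> G\<close>, of 1] that \<open>fst x + snd x = p\<close> by simp
    ultimately show ?thesis by blast
  qed
  from theI'[OF this] show "Xf G p \<in> G" "fst (Xf G p) + snd (Xf G p) = p" unfolding Xf_def by auto
qed

lemma lip_pair:
  fixes x x' :: "'a::euclidean_space \<times> 'a"
  assumes "inner (fst x - fst x') (snd x - snd x') \<ge> 0"
  shows "norm (x - x') \<le> norm ((fst x + snd x) - (fst x' + snd x'))"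
proof -
  define a where "a = fst x - fst x'"
  define b where "b = snd x - snd x'"
  have m: "norm (a - b) \<le> norm (a + b)"
    using mono_norm[OF assms] unfolding a_def b_def by (simp add: algebra_simps)
  have par: "(norm (a + b))\<^sup>2 + (norm (a - b))\<^sup>2 = 2 * (norm a)\<^sup>2 + 2 * (norm b)\<^sup>2"
    unfolding power2_norm_eq_inner by (simp add: inner_add_left inner_add_right inner_diff_left inner_diff_right inner_commute)
  have "(norm (a - b))\<^sup>2 \<le> (norm (a + b))\<^sup>2" using m by (simp add: power_mono)
  then have "(norm a)\<^sup>2 + (norm b)\<^sup>2 \<le> (norm (a + b))\<^sup>2" using par by linarith
  moreover have "norm (x - x') = sqrt ((norm a)\<^sup>2 + (norm b)\<^sup>2)"
    unfolding a_def b_def by (metis fst_diff norm_Pair prod.collapse snd_diff)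
  moreover have "(fst x + snd x) - (fst x' + snd x') = a + b" by (simp add: a_def b_def algebra_simps)
  ultimately show ?thesis by (metis norm_ge_zero real_sqrt_abs real_sqrt_le_mono abs_of_nonneg)
qed

lemma Xf_lip:
  fixes G :: "('a::euclidean_space \<times> 'a) set"
  assumes mx: "maximal_S_monotone G"
  shows "norm (Xf G p - Xf G p') \<le> norm (p - p')"
  using lip_pair[OF maximal_mono[OF mx Xf(1)[OF mx] Xf(1)[OF mx]]] Xf(2)[OF mx] by simp

lemma psi_lower:
  fixes G :: "('a::euclidean_space \<times> 'a) set"
  assumes mx: "maximal_S_monotone G"
  shows "ereal ((norm (Xf G (u+v) - (u,v)))\<^sup>2 / 2) \<le> psi G (u,v) - ereal (inner u v)"
proof -
  define x where "x = Xf G (u+v)"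
  have x: "x \<in> G" "fst x + snd x = u + v" using Xf[OF mx] unfolding x_def by auto
  define a where "a = fst x - u"
  have sv: "snd x - v = - a" using x(2) unfolding a_def by (simp add: algebra_simps)
  have "fval x (u,v) - inner u v = (norm a)\<^sup>2" unfolding fval_minus_inner sv a_def[symmetric]
    by (simp add: power2_norm_eq_inner)
  moreover have "(norm (x - (u,v)))\<^sup>2 = 2 * (norm a)\<^sup>2"
  proof -
    have "x - (u,v) = (a, - a)" using sv unfolding a_def by (simp add: prod_eq_iff)
    then show ?thesis by (simp add: norm_Pair)
  qed
  moreover have "ereal (fval x (u,v)) \<le> psi G (u,v)" unfolding psi_fval using x(1) by (rule SUP_upper)
  ultimately have "ereal (inner u v + (norm (x - (u,v)))\<^sup>2 / 2) \<le> psi G (u,v)"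
    by (metis add.commute diff_add_cancel nonzero_mult_div_cancel_left zero_neq_numeral)
  then show ?thesis unfolding x_def
    by (simp add: ereal_le_minus_iff algebra_simps)
qed



lemma pos_ball_set:
  fixes U V :: "'s \<Rightarrow> 'a::euclidean_space"
  assumes P: "prob_space M" and Um[measurable]: "U \<in> borel_measurable M" and Vm[measurable]: "V \<in> borel_measurable M"
  obtains k :: nat where "emeasure M {w\<in>space M. norm (U w) \<le> real k \<and> norm (V w) \<le> real k} > 0"
proof -
  define A where "A k = {w\<in>space M. norm (U w) \<le> real k \<and> norm (V w) \<le> real k}" for k :: nat
  have As: "A k \<in> sets M" for k unfolding A_def by measurable
  show ?thesis
  proof (rule ccontr)
    assume "\<not> ?thesis"
    then have "\<not> 0 < emeasure M (A k)" for k using that unfolding A_def by blast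
    then have "emeasure M (A k) = 0" for k by (simp add: not_less)
    then have "A k \<in> null_sets M" for k using As by auto
    then have "(\<Union>k. A k) \<in> null_sets M" by auto
    moreover have "(\<Union>k. A k) = space M"
    proof
      show "(\<Union>k. A k) \<subseteq> space M" unfolding A_def by auto
      show "space M \<subseteq> (\<Union>k. A k)"
      proof
        fix w assume w: "w \<in> space M"
        obtain k :: nat where "max (norm (U w)) (norm (V w)) \<le> real k" using real_arch_simple by blast
        then show "w \<in> (\<Union>k. A k)" using w unfolding A_def by auto
      qed
    qed
    ultimately have "emeasure M (space M) = 0" by auto
    then show False using prob_space.emeasure_space_1[OF P] by simp
  qed
qed

lemma bound_at_0:
  fixes U V :: "'s \<Rightarrow> 'a::euclidean_space" and G :: "('a \<times> 'a) set"
  assumes P: "prob_space M" and Um[measurable]: "U \<in> borel_measurable M" and Vm[measurable]: "V \<in> borel_measurable M"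
    and mx: "maximal_S_monotone G" and PhiK: "Phi M U V G \<le> ennreal K" and K0: "0 \<le> K"
    and Apos: "emeasure M {w\<in>space M. norm (U w) \<le> real k \<and> norm (V w) \<le> real k} > 0"
  shows "norm (Xf G 0) \<le> 4 * real k + 2 * (K + 1) / measure M {w\<in>space M. norm (U w) \<le> real k \<and> norm (V w) \<le> real k} + 1"
proof (rule ccontr)
  define A where "A = {w\<in>space M. norm (U w) \<le> real k \<and> norm (V w) \<le> real k}"
  define \<mu> where "\<mu> = measure M A"
  define d where "d = 2 * (K + 1) / \<mu> + 1"
  assume "\<not> ?thesis"
  then have big: "norm (Xf G 0) > 4 * real k + d" unfolding d_def \<mu>_def A_def by simp
  have As: "A \<in> sets M" unfolding A_def by measurable
  interpret prob_space M by (rule P)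
  have emA: "emeasure M A = ennreal \<mu>" unfolding \<mu>_def by (simp add: emeasure_eq_measure)
  have mu0: "\<mu> > 0" using Apos emA unfolding A_def by simp
  have d1: "d \<ge> 1" using mu0 K0 by (simp add: d_def)
  have pt: "ennreal (d\<^sup>2 / 2) * indicator A w \<le> e2ennreal (psi G (U w, V w) - ereal (inner (U w) (V w)))" for w
  proof (cases "w \<in> A")
    case True
    then have nU: "norm (U w) \<le> real k" and nV: "norm (V w) \<le> real k" unfolding A_def by auto
    define p where "p = U w + V w"
    have np: "norm p \<le> 2 * real k" using nU nV norm_triangle_ineq[of "U w" "V w"] unfolding p_def by linarith
    have ny: "norm (U w, V w) \<le> 2 * real k" using nU nV norm_Pair_le[of "U w" "V w"] by linarith
    have "norm (Xf G 0) \<le> norm (Xf G p - (U w, V w)) + norm (Xf G p - Xf G 0) + norm (U w, V w)"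
    proof -
      define A where "A = Xf G p"
      define B where "B = Xf G 0"
      define y where "y = (U w, V w)"
      have "norm B \<le> norm A + norm (A - B)" using norm_triangle_ineq4[of A "A - B"] by simp
      moreover have "norm A \<le> norm (A - y) + norm y" using norm_triangle_ineq[of "A - y" y] by simp
      ultimately show ?thesis unfolding A_def B_def y_def by linarith
    qed
    moreover have "norm (Xf G p - Xf G 0) \<le> norm p" using Xf_lip[OF mx, of p 0] by simp
    ultimately have "norm (Xf G p - (U w, V w)) \<ge> d" using big np ny by linarith
    then have "d\<^sup>2 \<le> (norm (Xf G p - (U w, V w)))\<^sup>2" using d1 by (intro power_mono) auto
    then have "ereal (d\<^sup>2 / 2) \<le> ereal ((norm (Xf G p - (U w, V w)))\<^sup>2 / 2)" by simp
    also have "\<dots> \<le> psi G (U w, V w) - ereal (inner (U w) (V w))" unfolding p_def by (rule psi_lower[OF mx])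
    finally have "e2ennreal (ereal (d\<^sup>2 / 2)) \<le> e2ennreal (psi G (U w, V w) - ereal (inner (U w) (V w)))"
      by (rule e2ennreal_mono)
    then show ?thesis using True by simp
  qed (simp)
  have "ennreal (d\<^sup>2 / 2) * emeasure M A = (\<integral>\<^sup>+ w. ennreal (d\<^sup>2 / 2) * indicator A w \<partial>M)"
    using As by (simp add: nn_integral_cmult_indicator)
  also have "\<dots> \<le> Phi M U V G" unfolding Phi_def by (rule nn_integral_mono) (rule pt)
  also have "\<dots> \<le> ennreal K" by (rule PhiK)
  finally have "ennreal (d\<^sup>2 / 2) * ennreal \<mu> \<le> ennreal K" using emA by simp
  moreover have "ennreal (d\<^sup>2 / 2 * \<mu>) = ennreal (d\<^sup>2 / 2) * ennreal \<mu>"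
    by (rule ennreal_mult) (use mu0 in auto)
  ultimately have "ennreal (d\<^sup>2 / 2 * \<mu>) \<le> ennreal K" by simp
  then have le: "d\<^sup>2 / 2 * \<mu> \<le> K" using K0 by simp
  have "d / 2 * \<mu> \<le> d\<^sup>2 / 2 * \<mu>" using d1 mu0 by (intro mult_right_mono) (auto simp: power2_eq_square)
  moreover have "d / 2 * \<mu> = (K + 1) + \<mu> / 2" using mu0 by (simp add: d_def field_simps)
  ultimately show False using le mu0 by linarith
qed



lemma diag_limit:
  fixes Xs :: "nat \<Rightarrow> 'a::euclidean_space \<Rightarrow> 'b::euclidean_space"
  assumes lip: "\<And>n p p'. norm (Xs n p - Xs n p') \<le> norm (p - p')"
    and bnd: "\<And>n. norm (Xs n 0) \<le> B"
  shows "\<exists>\<sigma> Xl. strict_mono \<sigma> \<and> (\<forall>p. (\<lambda>n. Xs (\<sigma> n) p) \<longlonglongrightarrow> Xl p)"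
proof -
  obtain D :: "'a set" where D: "countable D" "\<And>X. open X \<Longrightarrow> X \<noteq> {} \<Longrightarrow> \<exists>d\<in>D. d \<in> X"
    using countable_dense_setE by blast
  have Dne: "D \<noteq> {}" using D(2)[of UNIV] by auto
  define dd where "dd = from_nat_into D"
  have rdd: "range dd = D" unfolding dd_def using Dne D(1) by simp
  have nb: "norm (Xs n p) \<le> B + norm p" for n p
  proof -
    have "norm (Xs n p) \<le> norm (Xs n p - Xs n 0) + norm (Xs n 0)" using norm_triangle_ineq[of "Xs n p - Xs n 0" "Xs n 0"] by simp
    then show ?thesis using lip[of n p 0] bnd[of n] by simp
  qed
  interpret S: subseqs "\<lambda>k s. convergent (\<lambda>n. Xs (s n) (dd k))"
  proof
    fix k and s :: "nat \<Rightarrow> nat" assume "strict_mono s"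
    have "\<forall>n. Xs (s n) (dd k) \<in> cball 0 (B + norm (dd k))" using nb by simp
    then obtain l r where "strict_mono r" "((\<lambda>n. Xs (s n) (dd k)) \<circ> r) \<longlonglongrightarrow> l"
      using seq_compactE[OF compact_imp_seq_compact[OF compact_cball]] by metis
    then show "\<exists>r'. strict_mono r' \<and> convergent (\<lambda>n. Xs ((s \<circ> r') n) (dd k))"
      by (auto simp: convergent_def o_def)
  qed
  define \<sigma> where "\<sigma> = S.diagseq"
  have sm: "strict_mono \<sigma>" unfolding \<sigma>_def by (rule S.subseq_diagseq)
  have cdd: "convergent (\<lambda>n. Xs (\<sigma> n) (dd k))" for k
  proof -
    have "convergent (\<lambda>n. Xs ((S.diagseq \<circ> (+) (Suc k)) n) (dd k))"
    proof (rule S.diagseq_holds)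
      fix r s n assume "strict_mono (r :: nat \<Rightarrow> nat)" "convergent (\<lambda>m. Xs (s m) (dd n))"
      from convergent_subseq_convergent[OF this(2) this(1)]
      show "convergent (\<lambda>m. Xs ((s \<circ> r) m) (dd n))" by (simp add: o_def)
    qed
    then obtain L where "(\<lambda>n. Xs (S.diagseq (n + Suc k)) (dd k)) \<longlonglongrightarrow> L"
      by (auto simp: convergent_def o_def add.commute)
    then have "(\<lambda>n. Xs (\<sigma> n) (dd k)) \<longlonglongrightarrow> L" unfolding \<sigma>_def by (rule LIMSEQ_offset)
    then show ?thesis by (auto simp: convergent_def)
  qed
  have cauchy: "Cauchy (\<lambda>n. Xs (\<sigma> n) p)" for p
  proof (rule metric_CauchyI)
    fix e :: real assume e: "e > 0"
    obtain d where d: "d \<in> D" "d \<in> ball p (e/3)" using D(2)[of "ball p (e/3)"] e by auto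
    then obtain k where k: "dd k = d" using rdd by auto
    have "Cauchy (\<lambda>n. Xs (\<sigma> n) (dd k))" using cdd[of k] by (rule convergent_Cauchy)
    then obtain N where N: "\<And>m n. m \<ge> N \<Longrightarrow> n \<ge> N \<Longrightarrow> dist (Xs (\<sigma> m) (dd k)) (Xs (\<sigma> n) (dd k)) < e/3"
      using e metric_CauchyD[of "\<lambda>n. Xs (\<sigma> n) (dd k)" "e/3"] by auto
    have pd: "dist (Xs j p) (Xs j (dd k)) < e/3" for j
      using lip[of j p "dd k"] d(2) k by (simp add: dist_norm dist_commute)
    have "dist (Xs (\<sigma> m) p) (Xs (\<sigma> n) p) < e" if "m \<ge> N" "n \<ge> N" for m n
    proof -
      have "dist (Xs (\<sigma> m) p) (Xs (\<sigma> n) p) \<le> dist (Xs (\<sigma> m) p) (Xs (\<sigma> m) (dd k))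
          + dist (Xs (\<sigma> m) (dd k)) (Xs (\<sigma> n) (dd k)) + dist (Xs (\<sigma> n) (dd k)) (Xs (\<sigma> n) p)"
        using dist_triangle[of "Xs (\<sigma> m) p" "Xs (\<sigma> n) p" "Xs (\<sigma> n) (dd k)"]
          dist_triangle[of "Xs (\<sigma> m) p" "Xs (\<sigma> n) (dd k)" "Xs (\<sigma> m) (dd k)"] by linarith
      also have "\<dots> < e/3 + e/3 + e/3" using pd[of "\<sigma> m"] pd[of "\<sigma> n"] N[OF that]
        by (simp add: dist_commute)
      finally show ?thesis by simp
    qed
    then show "\<exists>M. \<forall>m\<ge>M. \<forall>n\<ge>M. dist (Xs (\<sigma> m) p) (Xs (\<sigma> n) p) < e" by blast
  qed
  define Xl where "Xl p = lim (\<lambda>n. Xs (\<sigma> n) p)" for p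
  have "(\<lambda>n. Xs (\<sigma> n) p) \<longlonglongrightarrow> Xl p" for p
    unfolding Xl_def using Cauchy_convergent[OF cauchy[of p]] by (simp add: convergent_LIMSEQ_iff)
  then show ?thesis using sm by blast
qed



lemma limit_graph:
  fixes Gs :: "nat \<Rightarrow> ('a::euclidean_space \<times> 'a) set"
  assumes mx: "\<And>n. maximal_S_monotone (Gs n)"
    and conv: "\<And>p. (\<lambda>n. Xf (Gs (\<sigma> n)) p) \<longlonglongrightarrow> Xl p"
  shows "maximal_S_monotone (range Xl)"
    and "\<And>c. c < psi (range Xl) y \<Longrightarrow> eventually (\<lambda>n. c < psi (Gs (\<sigma> n)) y) sequentially"
proof -
  have sum: "fst (Xl p) + snd (Xl p) = p" for p
  proof -
    have "(\<lambda>n. fst (Xf (Gs (\<sigma> n)) p) + snd (Xf (Gs (\<sigma> n)) p)) \<longlonglongrightarrow> fst (Xl p) + snd (Xl p)"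
      using conv[of p] by (intro tendsto_intros)
    moreover have "(\<lambda>n. fst (Xf (Gs (\<sigma> n)) p) + snd (Xf (Gs (\<sigma> n)) p)) = (\<lambda>n. p)"
      using Xf(2)[OF mx] by simp
    ultimately show ?thesis using LIMSEQ_unique tendsto_const by metis
  qed
  have "S_monotone (range Xl)" unfolding S_monotone_iff
  proof (intro ballI)
    fix y1 y2 assume "y1 \<in> range Xl" "y2 \<in> range Xl"
    then obtain p1 p2 where y: "y1 = Xl p1" "y2 = Xl p2" by auto
    have "(\<lambda>n. inner (fst (Xf (Gs (\<sigma> n)) p1) - fst (Xf (Gs (\<sigma> n)) p2)) (snd (Xf (Gs (\<sigma> n)) p1) - snd (Xf (Gs (\<sigma> n)) p2)))
        \<longlonglongrightarrow> inner (fst y1 - fst y2) (snd y1 - snd y2)"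
      unfolding y using conv[of p1] conv[of p2] by (intro tendsto_intros)
    moreover have "inner (fst (Xf (Gs (\<sigma> n)) p1) - fst (Xf (Gs (\<sigma> n)) p2)) (snd (Xf (Gs (\<sigma> n)) p1) - snd (Xf (Gs (\<sigma> n)) p2)) \<ge> 0" for n
      by (rule maximal_mono[OF mx Xf(1)[OF mx] Xf(1)[OF mx]])
    ultimately show "inner (fst y1 - fst y2) (snd y1 - snd y2) \<ge> 0" using LIMSEQ_le_const by blast
  qed
  then show "maximal_S_monotone (range Xl)"
  proof (rule minty_converse)
    fix z show "\<exists>x\<in>range Xl. fst x + snd x = z" by (rule bexI[of _ "Xl z"]) (simp_all add: sum)
  qed
  fix c assume "c < psi (range Xl) y"
  then obtain p where p: "c < ereal (fval (Xl p) y)" unfolding psi_fval by (auto simp: less_SUP_iff)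
  have "(\<lambda>n. ereal (fval (Xf (Gs (\<sigma> n)) p) y)) \<longlonglongrightarrow> ereal (fval (Xl p) y)"
    unfolding fval_def Sform_def using conv[of p] by (intro tendsto_intros) simp_all
  from order_tendstoD(1)[OF this p] show "eventually (\<lambda>n. c < psi (Gs (\<sigma> n)) y) sequentially"
  proof (rule eventually_mono)
    fix n assume "c < ereal (fval (Xf (Gs (\<sigma> n)) p) y)"
    also have "ereal (fval (Xf (Gs (\<sigma> n)) p) y) \<le> psi (Gs (\<sigma> n)) y"
      unfolding psi_fval using Xf(1)[OF mx] by (rule SUP_upper)
    finally show "c < psi (Gs (\<sigma> n)) y" .
  qed
qed

lemma e2_less: "c < e2ennreal z \<longleftrightarrow> enn2ereal c < z"
proof (cases "z \<ge> 0")
  case True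
  then show ?thesis using enn2ereal_e2ennreal[OF True] by (metis less_ennreal.rep_eq)
next
  case False
  then have "e2ennreal z = 0" by (simp add: e2ennreal_neg)
  moreover have "\<not> enn2ereal c < z" using False enn2ereal_nonneg[of c] by (meson le_less_trans less_imp_le)
  ultimately show ?thesis by simp
qed

lemma lsc_lift:
  fixes a :: ereal and an :: "nat \<Rightarrow> ereal" and h :: real
  assumes "\<And>c. c < a \<Longrightarrow> eventually (\<lambda>n. c < an n) sequentially"
  shows "e2ennreal (a - ereal h) \<le> liminf (\<lambda>n. e2ennreal (an n - ereal h))"
  unfolding le_Liminf_iff
proof (intro allI impI)
  fix y assume "y < e2ennreal (a - ereal h)"
  then have "enn2ereal y < a - ereal h" by (simp add: e2_less)
  then have "enn2ereal y + ereal h < a" by (simp add: ereal_less_minus_iff)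
  from assms[OF this] show "eventually (\<lambda>n. y < e2ennreal (an n - ereal h)) sequentially"
    by (rule eventually_mono) (simp add: e2_less ereal_less_minus_iff)
qed



lemma exists_opt:
  fixes M :: "'s measure" and U V :: "'s \<Rightarrow> 'a::euclidean_space"
  assumes P: "prob_space M"
    and Um: "U \<in> borel_measurable M" and Vm: "V \<in> borel_measurable M"
    and iU: "integrable M (\<lambda>w. (norm (U w))\<^sup>2)"
    and iV: "integrable M (\<lambda>w. (norm (V w))\<^sup>2)"
  shows "\<exists>G. dual_optimal M U V G"
proof -
  define \<Phi> where "\<Phi> = Phi M U V"
  define m where "m = (INF H\<in>{H. maximal_S_monotone H}. \<Phi> H)"
  have PId: "\<Phi> IdG \<noteq> \<infinity>"
  proof
    assume "\<Phi> IdG = \<infinity>"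
    then have "eexpectation M (\<lambda>w. psi IdG (U w, V w)) = \<infinity>"
      unfolding eexp_Phi[OF Um Vm iU iV IdG_maximal] \<Phi>_def by simp
    then show False using eexp_IdG_fin[OF iU iV] by simp
  qed
  have mle: "m \<le> \<Phi> IdG" unfolding m_def using IdG_maximal by (auto intro: INF_lower)
  then have mfin: "m \<noteq> \<infinity>" using PId by (auto simp: top_unique)
  have "\<exists>H. maximal_S_monotone H \<and> \<Phi> H < m + ennreal (1 / (real n + 1))" for n
  proof -
    have "m + 0 < m + ennreal (1 / (real n + 1))" using mfin
      by (subst ennreal_add_left_cancel_less) auto
    then have "(INF H\<in>{H. maximal_S_monotone H}. \<Phi> H) < m + ennreal (1 / (real n + 1))" by (simp add: m_def)
    then show ?thesis by (auto simp: INF_less_iff)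
  qed
  then obtain Gs where Gs: "\<And>n. maximal_S_monotone (Gs n)" "\<And>n. \<Phi> (Gs n) < m + ennreal (1 / (real n + 1))"
    by metis
  define K where "K = enn2real (\<Phi> IdG) + 1"
  have K0: "0 \<le> K" by (simp add: K_def)
  have PhiK: "Phi M U V (Gs n) \<le> ennreal K" for n
  proof -
    have "\<Phi> (Gs n) \<le> m + ennreal (1 / (real n + 1))" using Gs(2)[of n] by simp
    also have "\<dots> \<le> \<Phi> IdG + ennreal 1" using mle by (intro add_mono) auto
    also have "\<dots> = ennreal K" using PId unfolding K_def
      by (cases "\<Phi> IdG") auto
    finally show ?thesis by (simp add: \<Phi>_def)
  qed
  obtain k :: nat where kpos: "emeasure M {w\<in>space M. norm (U w) \<le> real k \<and> norm (V w) \<le> real k} > 0"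
    using pos_ball_set[OF P Um Vm] by blast
  define B where "B = 4 * real k + 2 * (K + 1) / measure M {w\<in>space M. norm (U w) \<le> real k \<and> norm (V w) \<le> real k} + 1"
  have bnd: "norm (Xf (Gs n) 0) \<le> B" for n
    unfolding B_def by (rule bound_at_0[OF P Um Vm Gs(1) PhiK K0 kpos])
  obtain \<sigma> Xl where sX: "strict_mono \<sigma>" "\<And>p. (\<lambda>n. Xf (Gs (\<sigma> n)) p) \<longlonglongrightarrow> Xl p"
    using diag_limit[of "\<lambda>n. Xf (Gs n)" B, OF Xf_lip[OF Gs(1)] bnd] by blast
  define G where "G = range Xl"
  have mxG: "maximal_S_monotone G" unfolding G_def by (rule limit_graph(1)[where Gs=Gs and \<sigma>=\<sigma> and Xl=Xl, OF Gs(1) sX(2)])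
  define g where "g n w = e2ennreal (psi (Gs (\<sigma> n)) (U w, V w) - ereal (inner (U w) (V w)))" for n w
  have gm: "g n \<in> borel_measurable M" for n
  proof -
    have "(\<lambda>w. psi (Gs (\<sigma> n)) (U w, V w) - ereal (inner (U w) (V w))) \<in> borel_measurable M"
      using psiY_meas[OF Um Vm] borel_measurable_inner[OF Um Vm] by measurable
    then show ?thesis unfolding g_def by measurable
  qed
  have "\<Phi> G \<le> (\<integral>\<^sup>+ w. liminf (\<lambda>n. g n w) \<partial>M)"
    unfolding \<Phi>_def Phi_def g_def
  proof (rule nn_integral_mono)
    fix w
    show "e2ennreal (psi G (U w, V w) - ereal (inner (U w) (V w)))
        \<le> liminf (\<lambda>n. e2ennreal (psi (Gs (\<sigma> n)) (U w, V w) - ereal (inner (U w) (V w))))"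
      by (rule lsc_lift) (use limit_graph(2)[where Gs=Gs and \<sigma>=\<sigma> and Xl=Xl, OF Gs(1) sX(2)] in \<open>simp add: G_def\<close>)
  qed
  also have "\<dots> \<le> liminf (\<lambda>n. integral\<^sup>N M (g n))" by (rule nn_integral_liminf[OF gm])
  also have "\<dots> = liminf (\<lambda>n. \<Phi> (Gs (\<sigma> n)))" by (simp add: g_def[abs_def] \<Phi>_def Phi_def)
  also have "\<dots> \<le> liminf (\<lambda>n. m + ennreal (1 / (real n + 1)))"
  proof (rule Liminf_mono)
    show "eventually (\<lambda>n. \<Phi> (Gs (\<sigma> n)) \<le> m + ennreal (1 / (real n + 1))) sequentially"
    proof (intro always_eventually allI)
      fix n
      have "\<Phi> (Gs (\<sigma> n)) \<le> m + ennreal (1 / (real (\<sigma> n) + 1))" using Gs(2)[of "\<sigma> n"] by simp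
      also have "\<dots> \<le> m + ennreal (1 / (real n + 1))"
        using seq_suble[OF sX(1), of n] by (intro add_mono ennreal_leI) (auto simp: divide_simps)
      finally show "\<Phi> (Gs (\<sigma> n)) \<le> m + ennreal (1 / (real n + 1))" .
    qed
  qed
  also have "\<dots> = m"
  proof (rule lim_imp_Liminf)
    show "sequentially \<noteq> bot" by simp
    have "(\<lambda>n. 1 / (real n + 1)) \<longlonglongrightarrow> 0"
      using LIMSEQ_inverse_real_of_nat_add[of 0] by (simp add: inverse_eq_divide add.commute)
    then have "(\<lambda>n. ennreal (1 / (real n + 1))) \<longlonglongrightarrow> ennreal 0" by (rule tendsto_ennrealI)
    then have "(\<lambda>n. m + ennreal (1 / (real n + 1))) \<longlonglongrightarrow> m + 0" by (intro tendsto_add tendsto_const) simp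
    then show "(\<lambda>n. m + ennreal (1 / (real n + 1))) \<longlonglongrightarrow> m" by simp
  qed
  finally have Gm: "\<Phi> G \<le> m" .
  have "dual_optimal M U V G"
    unfolding dual_optimal_def
  proof (intro conjI mxG allI impI)
    fix H :: "('a \<times> 'a) set" assume H: "maximal_S_monotone H"
    have "Phi M U V G \<le> Phi M U V H" using Gm H unfolding m_def \<Phi>_def
      by (meson INF_lower mem_Collect_eq order_trans)
    then show "eexpectation M (\<lambda>w. psi G (U w, V w)) \<le> eexpectation M (\<lambda>w. psi H (U w, V w))"
      by (rule eexp_cmp[OF Um Vm iU iV mxG H])
  qed
  then show ?thesis by blast
qed



theorem lemma10:
  fixes M :: "'s measure" and U V :: "'s \<Rightarrow> 'a::euclidean_space"
  assumes "prob_space M"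
    and "U \<in> borel_measurable M" and "V \<in> borel_measurable M"
    and "integrable M (\<lambda>w. (norm (U w))\<^sup>2)"
    and "integrable M (\<lambda>w. (norm (V w))\<^sup>2)"
  shows "(convex hull (law_support M U) = UNIV \<longrightarrow>
            (\<forall>G. dual_optimal M U V G \<longrightarrow> {u. \<exists>v. (u, v) \<in> G} = UNIV))
       \<and> ((\<exists>C. AE w in M. norm (V w) \<le> C) \<longrightarrow>
            (\<exists>G. dual_optimal M U V G \<and> {u. \<exists>v. (u, v) \<in> G} = UNIV))"
proof (intro conjI impI allI)
  fix G assume "convex hull (law_support M U) = UNIV" "dual_optimal M U V G"
  then show "{u. \<exists>v. (u, v) \<in> G} = UNIV" using part_a[OF assms] by blast
next
  assume "\<exists>C. AE w in M. norm (V w) \<le> C"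
  then obtain C where C: "AE w in M. norm (V w) \<le> C" by blast
  obtain G0 where G0: "dual_optimal M U V G0" using exists_opt[OF assms] by blast
  have mx0: "maximal_S_monotone G0" using G0 unfolding dual_optimal_def by blast
  obtain x1 where x1: "x1 \<in> G0" using maximal_nonempty[OF mx0] by blast
  define R where "R = max C (norm (snd x1) + 1)"
  have x1R: "norm (snd x1) < R" unfolding R_def by simp
  define G' where "G' = trunc G0 R"
  have mx': "maximal_S_monotone G'" unfolding G'_def by (rule trunc_maximal[OF mx0 x1 x1R])
  have full: "{u. \<exists>v. (u, v) \<in> G'} = UNIV" unfolding G'_def by (rule trunc_full[OF mx0 x1 x1R])
  have le0: "eexpectation M (\<lambda>w. psi G' (U w, V w)) \<le> eexpectation M (\<lambda>w. psi G0 (U w, V w))"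
  proof (rule eexp_mono_AE)
    show "AE w in M. psi G' (U w, V w) \<le> psi G0 (U w, V w)"
      using C
    proof (rule eventually_mono)
      fix w assume "norm (V w) \<le> C"
      then have "norm (V w) \<le> R" unfolding R_def by simp
      then show "psi G' (U w, V w) \<le> psi G0 (U w, V w)" unfolding G'_def by (rule trunc_psi)
    qed
  qed
  have "dual_optimal M U V G'"
    unfolding dual_optimal_def
  proof (intro conjI mx' allI impI)
    fix H :: "('a \<times> 'a) set" assume "maximal_S_monotone H"
    then have "eexpectation M (\<lambda>w. psi G0 (U w, V w)) \<le> eexpectation M (\<lambda>w. psi H (U w, V w))"
      using G0 unfolding dual_optimal_def by blast
    then show "eexpectation M (\<lambda>w. psi G' (U w, V w)) \<le> eexpectation M (\<lambda>w. psi H (U w, V w))"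
      using le0 by (rule order_trans[rotated])
  qed
  then show "\<exists>G. dual_optimal M U V G \<and> {u. \<exists>v. (u, v) \<in> G} = UNIV" using full by blast
qed

end
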